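(* Let $\mathbb{F}$ be a field of characteristic $p>0$, $0\neq h\in\mathbb{F}[x]$, and $A=A_h$ the unital subalgebra of the Weyl algebra $A_1$ generated by $x$ and $\hat y=yh$. Then: (a) for all $z\in\mathsf{Z}(A)$, $f\in\mathbb{F}[x]$ and $0\leq j\leq p-2$, $[\hat y,zfh^jy^j]\in[x,A]$, and $[\hat y,zfh^{p-1}y^{p-1}]=zhf'h^{p-1}y^{p-1}$; (b) $[x,A]+[\hat y,A]=\bigoplus_{\substack{i,j=0\\(i,j)\neq(p-1,p-1)}}^{p-1}\mathsf{Z}(A)hx^ih^jy^j$; (c) $hA=\big([x,A]+[\hat y,A]\big)\oplus h\mathsf{Z}(A)x^{p-1}h^{p-1}y^{p-1}$.
   Context: $A_1$ is generated by $x,y$ with $yx-xy=1$; $h^jy^j\in A$ for all $j\geq0$. $\mathsf{Z}(A)$ is the center of $A$. $[a,b]=ab-ba$ and $[u,A]=\{[u,a]:a\in A\}$. $f'$ is the derivative of $f$. *)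

theory Defs
  imports "HOL-Library.Poly_Mapping" "HOL-Computational_Algebra.Polynomial"
begin

text \<open>The first Weyl algebra A_1 over a field, realised concretely on its PBW basis:
  an element is a finitely supported family of coefficients c(i,j), standing for
  the sum of c(i,j) x^i y^j (normally ordered monomials).  Multiplication is
  determined by yx - xy = 1, i.e.
  (x^i y^j)(x^k y^m) = sum over l of (j choose l)(k choose l) l! x^(i+k-l) y^(j+m-l).
  NOTE: the product of the Weyl algebra is weyl_mult, NOT the (commutative)
  times operation of poly_mapping.\<close>

type_synonym 'a weyl = "(nat \<times> nat) \<Rightarrow>\<^sub>0 'a"

definition weyl_mult :: "'a::field weyl \<Rightarrow> 'a weyl \<Rightarrow> 'a weyl" (infixl "\<cdot>\<^sub>W" 70) where
  "a \<cdot>\<^sub>W b =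
     (\<Sum>(i,j)\<in>Poly_Mapping.keys a. \<Sum>(k,m)\<in>Poly_Mapping.keys b. \<Sum>l\<in>{..min j k}.
        Poly_Mapping.single (i + k - l, j + m - l)
          (Poly_Mapping.lookup a (i,j) * Poly_Mapping.lookup b (k,m) * of_nat ((j choose l) * (k choose l) * fact l)))"

definition weyl_one :: "'a::field weyl" where
  "weyl_one = Poly_Mapping.single (0,0) 1"

definition weyl_smult :: "'a::field \<Rightarrow> 'a weyl \<Rightarrow> 'a weyl" where
  "weyl_smult c a = Poly_Mapping.map (\<lambda>u. c * u) a"

definition weyl_x :: "'a::field weyl" where
  "weyl_x = Poly_Mapping.single (1,0) 1"

definition weyl_y :: "'a::field weyl" where
  "weyl_y = Poly_Mapping.single (0,1) 1"

primrec weyl_pow :: "'a::field weyl \<Rightarrow> nat \<Rightarrow> 'a weyl" where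
  "weyl_pow a 0 = weyl_one"
| "weyl_pow a (Suc n) = a \<cdot>\<^sub>W weyl_pow a n"

definition weyl_of_poly :: "'a::field poly \<Rightarrow> 'a weyl" where
  "weyl_of_poly f = (\<Sum>i\<le>degree f. Poly_Mapping.single (i,0) (coeff f i))"

definition weyl_comm :: "'a::field weyl \<Rightarrow> 'a weyl \<Rightarrow> 'a weyl" where
  "weyl_comm a b = a \<cdot>\<^sub>W b - b \<cdot>\<^sub>W a"

definition comm_set :: "'a::field weyl \<Rightarrow> 'a weyl set \<Rightarrow> 'a weyl set" where
  "comm_set u A = {weyl_comm u a | a. a \<in> A}"

inductive_set weyl_subalg :: "'a::field weyl set \<Rightarrow> 'a weyl set" for S where
  gen: "s \<in> S \<Longrightarrow> s \<in> weyl_subalg S"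
| one: "weyl_one \<in> weyl_subalg S"
| add: "a \<in> weyl_subalg S \<Longrightarrow> b \<in> weyl_subalg S \<Longrightarrow> a + b \<in> weyl_subalg S"
| smult: "a \<in> weyl_subalg S \<Longrightarrow> weyl_smult c a \<in> weyl_subalg S"
| mult: "a \<in> weyl_subalg S \<Longrightarrow> b \<in> weyl_subalg S \<Longrightarrow> a \<cdot>\<^sub>W b \<in> weyl_subalg S"

definition weyl_center :: "'a::field weyl set \<Rightarrow> 'a weyl set" where
  "weyl_center A = {z \<in> A. \<forall>a\<in>A. z \<cdot>\<^sub>W a = a \<cdot>\<^sub>W z}"

definition yhat :: "'a::field poly \<Rightarrow> 'a weyl" where
  "yhat h = weyl_y \<cdot>\<^sub>W weyl_of_poly h"

definition A_h :: "'a::field poly \<Rightarrow> 'a weyl set" where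
  "A_h h = weyl_subalg {weyl_x, yhat h}"

end

theory Submission
  imports Defs
begin


abbreviation lk where "lk \<equiv> Poly_Mapping.lookup"
abbreviation sg where "sg \<equiv> Poly_Mapping.single"
abbreviation ks where "ks \<equiv> Poly_Mapping.keys"

definition mm :: "nat \<times> nat \<Rightarrow> nat \<times> nat \<Rightarrow> 'a::field \<Rightarrow> 'a weyl" where
  "mm u v c = (\<Sum>l\<in>{..min (snd u) (fst v)}. sg (fst u + fst v - l, snd u + snd v - l)
      (c * of_nat ((snd u choose l) * (fst v choose l) * fact l)))"

lemma mm_add: "mm u v (c + d) = mm u v c + mm u v d"
  by (simp add: mm_def single_add distrib_right sum.distrib)

lemma mm_zero[simp]: "mm u v 0 = 0"
  by (simp add: mm_def)

lemma weyl_mult_mm: "a \<cdot>\<^sub>W b = (\<Sum>u\<in>ks a. \<Sum>v\<in>ks b. mm u v (lk a u * lk b v))"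
  unfolding weyl_mult_def mm_def by (simp add: case_prod_beta)

lemma poly_mapping_sum_singles: "(\<Sum>k\<in>ks a. sg k (lk a k)) = a"
  by (rule poly_mapping_eqI) (auto simp: lookup_sum lookup_single when_def in_keys_iff)

lemma weyl_mult_super:
  assumes "finite S" "ks a \<subseteq> S" "finite T" "ks b \<subseteq> T"
  shows "a \<cdot>\<^sub>W b = (\<Sum>u\<in>S. \<Sum>v\<in>T. mm u v (lk a u * lk b v))"
proof -
  have "a \<cdot>\<^sub>W b = (\<Sum>u\<in>ks a. \<Sum>v\<in>T. mm u v (lk a u * lk b v))"
    unfolding weyl_mult_mm
    by (rule sum.cong[OF refl], rule sum.mono_neutral_left) (use assms in \<open>auto simp: in_keys_iff\<close>)
  also have "\<dots> = (\<Sum>u\<in>S. \<Sum>v\<in>T. mm u v (lk a u * lk b v))"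
    by (rule sum.mono_neutral_left) (use assms in \<open>auto simp: in_keys_iff\<close>)
  finally show ?thesis .
qed

lemma weyl_add_mult: "(a + b) \<cdot>\<^sub>W c = a \<cdot>\<^sub>W c + b \<cdot>\<^sub>W c"
proof -
  let ?S = "ks a \<union> ks b"
  have k: "ks (a + b) \<subseteq> ?S" by (rule keys_add)
  show ?thesis
    apply (subst weyl_mult_super[of ?S _ "ks c"], use k in auto)
    apply (subst weyl_mult_super[of ?S a "ks c"], auto)
    apply (subst weyl_mult_super[of ?S b "ks c"], auto)
    apply (simp add: lookup_add distrib_right mm_add sum.distrib)
    done
qed

lemma weyl_mult_add: "c \<cdot>\<^sub>W (a + b) = c \<cdot>\<^sub>W a + c \<cdot>\<^sub>W b"
proof -
  let ?S = "ks a \<union> ks b"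
  have k: "ks (a + b) \<subseteq> ?S" by (rule keys_add)
  show ?thesis
    apply (subst weyl_mult_super[of "ks c" _ ?S], use k in auto)
    apply (subst weyl_mult_super[of "ks c" _ ?S a], auto)
    apply (subst weyl_mult_super[of "ks c" _ ?S b], auto)
    apply (simp add: lookup_add distrib_left mm_add sum.distrib)
    done
qed

lemma weyl_zero_mult[simp]: "0 \<cdot>\<^sub>W a = 0"
  by (simp add: weyl_mult_mm)

lemma weyl_mult_zero[simp]: "a \<cdot>\<^sub>W 0 = 0"
  by (simp add: weyl_mult_mm)

lemma weyl_uminus_mult: "(- a) \<cdot>\<^sub>W b = - (a \<cdot>\<^sub>W b)"
  using weyl_add_mult[of a "-a" b] by (simp add: eq_neg_iff_add_eq_0 add.commute)

lemma weyl_mult_uminus: "b \<cdot>\<^sub>W (- a) = - (b \<cdot>\<^sub>W a)"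
  using weyl_mult_add[of b a "-a"] by (simp add: eq_neg_iff_add_eq_0 add.commute)

lemma weyl_diff_mult: "(a - b) \<cdot>\<^sub>W c = a \<cdot>\<^sub>W c - b \<cdot>\<^sub>W c"
  using weyl_add_mult[of a "-b" c] by (simp add: weyl_uminus_mult)

lemma weyl_mult_diff: "c \<cdot>\<^sub>W (a - b) = c \<cdot>\<^sub>W a - c \<cdot>\<^sub>W b"
  using weyl_mult_add[of c a "-b"] by (simp add: weyl_mult_uminus)

lemma weyl_sum_mult: "(\<Sum>i\<in>S. f i) \<cdot>\<^sub>W b = (\<Sum>i\<in>S. f i \<cdot>\<^sub>W b)"
  by (induction S rule: infinite_finite_induct) (auto simp: weyl_add_mult)

lemma weyl_mult_sum: "b \<cdot>\<^sub>W (\<Sum>i\<in>S. f i) = (\<Sum>i\<in>S. b \<cdot>\<^sub>W f i)"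
  by (induction S rule: infinite_finite_induct) (auto simp: weyl_mult_add)

lemma single_mult_single: "sg u c \<cdot>\<^sub>W sg v d = mm u v (c * d)"
  by (subst weyl_mult_super[of "{u}" _ "{v}"]) auto

lemma lookup_smult[simp]: "lk (weyl_smult c a) k = c * lk a k"
  unfolding weyl_smult_def by transfer (simp add: when_def)

lemma wsmult_add: "weyl_smult c (a + b) = weyl_smult c a + weyl_smult c b"
  by (rule poly_mapping_eqI) (simp add: lookup_add distrib_left)

lemma wsmult_sum: "weyl_smult c (\<Sum>i\<in>S. f i) = (\<Sum>i\<in>S. weyl_smult c (f i))"
  by (rule poly_mapping_eqI) (simp add: lookup_sum sum_distrib_left)

lemma wsmult_single: "weyl_smult c (sg k d) = sg k (c * d)"
  by (rule poly_mapping_eqI) (simp add: lookup_single when_def)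

lemma wsmult_mm: "weyl_smult e (mm u v c) = mm u v (e * c)"
  by (simp add: mm_def wsmult_sum wsmult_single mult.assoc)

lemma keys_smult: "ks (weyl_smult c a) \<subseteq> ks a"
  by (auto simp: in_keys_iff)

lemma weyl_smult_mult: "(weyl_smult e a) \<cdot>\<^sub>W b = weyl_smult e (a \<cdot>\<^sub>W b)"
  apply (subst weyl_mult_super[of "ks a" _ "ks b"], use keys_smult in auto)
  apply (subst weyl_mult_mm)
  apply (simp add: wsmult_sum wsmult_mm mult.assoc)
  done

lemma weyl_mult_smult: "b \<cdot>\<^sub>W (weyl_smult e a) = weyl_smult e (b \<cdot>\<^sub>W a)"
  apply (subst weyl_mult_super[of "ks b" _ "ks a"], use keys_smult in auto)
  apply (subst weyl_mult_mm)
  apply (simp add: wsmult_sum wsmult_mm mult.assoc mult.left_commute)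
  done

lemma wsmult_smult[simp]: "weyl_smult c (weyl_smult d a) = weyl_smult (c * d) a"
  by (rule poly_mapping_eqI) (simp add: mult.assoc)

lemma wsmult_one[simp]: "weyl_smult 1 a = a"
  by (rule poly_mapping_eqI) simp

lemma wsmult_zero[simp]: "weyl_smult 0 a = 0"
  by (rule poly_mapping_eqI) simp

lemma wsmult_zero2[simp]: "weyl_smult c 0 = 0"
  by (rule poly_mapping_eqI) simp

lemma wsmult_add_left: "weyl_smult (c + d) a = weyl_smult c a + weyl_smult d a"
  by (rule poly_mapping_eqI) (simp add: lookup_add distrib_right)

lemma wsmult_diff: "weyl_smult c (a - b) = weyl_smult c a - weyl_smult c b"
  by (rule poly_mapping_eqI) (simp add: lookup_minus right_diff_distrib)

lemma wsmult_uminus: "weyl_smult c (- a) = - weyl_smult c a"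
  by (rule poly_mapping_eqI) simp

lemma wsmult_neg1: "weyl_smult (-1) a = - a"
  by (rule poly_mapping_eqI) simp

lemma one_mult_single: "weyl_one \<cdot>\<^sub>W sg v d = sg v d"
  by (simp add: weyl_one_def single_mult_single mm_def)

lemma single_mult_one: "sg v d \<cdot>\<^sub>W weyl_one = sg v d"
  by (simp add: weyl_one_def single_mult_single mm_def)

lemma weyl_one_mult[simp]: "weyl_one \<cdot>\<^sub>W a = a"
proof -
  have "weyl_one \<cdot>\<^sub>W a = weyl_one \<cdot>\<^sub>W (\<Sum>k\<in>ks a. sg k (lk a k))" by (simp add: poly_mapping_sum_singles)
  also have "\<dots> = a" unfolding weyl_mult_sum one_mult_single by (rule poly_mapping_sum_singles)
  finally show ?thesis .
qed

lemma weyl_mult_one[simp]: "a \<cdot>\<^sub>W weyl_one = a"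
proof -
  have "a \<cdot>\<^sub>W weyl_one = (\<Sum>k\<in>ks a. sg k (lk a k)) \<cdot>\<^sub>W weyl_one" by (simp add: poly_mapping_sum_singles)
  also have "\<dots> = a" unfolding weyl_sum_mult single_mult_one by (rule poly_mapping_sum_singles)
  finally show ?thesis .
qed



lemma choose_fact_Suc: "(k choose Suc s) * fact (Suc s) = (k choose s) * fact s * (k - s)"
proof -
  have "Suc s * (k choose Suc s) = (k - s) * (k choose s)"
    using binomial_absorption[of s k] binomial_absorb_comp[of k s] by simp
  have "(k choose Suc s) * fact (Suc s) = (Suc s * (k choose Suc s)) * fact s"
    by (simp only: fact_Suc of_nat_id mult_ac)
  also have "\<dots> = (k choose s) * fact s * (k - s)" using \<open>Suc s * _ = _\<close> by simp
  finally show ?thesis .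
qed

lemma x_mult_single: "weyl_x \<cdot>\<^sub>W sg (k,m) c = sg (Suc k, m) c"
  by (simp add: weyl_x_def single_mult_single mm_def)

lemma y_mult_single: "weyl_y \<cdot>\<^sub>W sg (k,m) c = sg (k, Suc m) c + sg (k - 1, m) (of_nat k * c)"
proof (cases k)
  case 0
  then show ?thesis by (simp add: weyl_y_def single_mult_single mm_def)
next
  case (Suc k')
  have "{..Suc 0} = {0, Suc 0}" by auto
  then show ?thesis using Suc by (simp add: weyl_y_def single_mult_single mm_def mult.commute)
qed

definition mmy :: "nat \<Rightarrow> nat \<Rightarrow> nat \<Rightarrow> 'a::field \<Rightarrow> 'a weyl" where
  "mmy j k m d = (\<Sum>l\<le>j. sg (k - l, j + m - l) (d * of_nat ((j choose l) * (k choose l) * fact l)))"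

lemma mm_mmy: "mm (0,j) (k,m) d = mmy j k m d"
  unfolding mm_def mmy_def
  by simp (rule sum.mono_neutral_left, auto, metis binomial_eq_0 not_le of_nat_0 mult_zero_left mult_zero_right single_zero)

lemma y_mmy: "weyl_y \<cdot>\<^sub>W mmy j k m d = mmy (Suc j) k m d"
proof -
  define e where "e l = d * of_nat ((j choose l) * (k choose l) * fact l)" for l
  have "weyl_y \<cdot>\<^sub>W mmy j k m d = (\<Sum>l\<le>j. sg (k - l, Suc (j + m - l)) (e l)
        + sg (k - l - 1, j + m - l) (of_nat (k - l) * e l))"
    by (simp add: mmy_def weyl_mult_sum y_mult_single e_def)
  also have "\<dots> = (\<Sum>l\<le>j. sg (k - l, Suc (j + m - l)) (e l))
        + (\<Sum>l\<le>j. sg (k - Suc l, j + m - l) (of_nat (k - l) * e l))"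
    by (simp add: sum.distrib)
  also have "(\<Sum>l\<le>j. sg (k - l, Suc (j + m - l)) (e l))
      = (\<Sum>l\<le>Suc j. sg (k - l, Suc j + m - l) (d * of_nat ((j choose l) * (k choose l) * fact l)))"
    by (simp add: e_def Suc_diff_le binomial_eq_0)
  also have "(\<Sum>l\<le>j. sg (k - Suc l, j + m - l) (of_nat (k - l) * e l))
      = (\<Sum>l\<le>j. sg (k - Suc l, j + m - l) (d * of_nat ((j choose l) * (k choose Suc l) * fact (Suc l))))"
  proof (rule sum.cong[OF refl])
    fix l
    have eq: "(of_nat ((j choose l) * (k choose Suc l) * fact (Suc l)) :: 'a) = of_nat (k - l) * of_nat ((j choose l) * (k choose l) * fact l)"
      by (metis choose_fact_Suc mult.assoc mult.commute of_nat_mult)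
    then show "sg (k - Suc l, j + m - l) (of_nat (k - l) * e l) =
         sg (k - Suc l, j + m - l) (d * of_nat ((j choose l) * (k choose Suc l) * fact (Suc l)))"
      by (simp only: e_def eq mult_ac)
  qed
  also have "(\<Sum>l\<le>Suc j. sg (k - l, Suc j + m - l) (d * of_nat ((j choose l) * (k choose l) * fact l)))
      + (\<Sum>l\<le>j. sg (k - Suc l, j + m - l) (d * of_nat ((j choose l) * (k choose Suc l) * fact (Suc l))))
      = mmy (Suc j) k m d"
  proof -
    have "mmy (Suc j) k m d = sg (k, Suc j + m) d
       + (\<Sum>l\<le>j. sg (k - Suc l, j + m - l) (d * of_nat ((Suc j choose Suc l) * (k choose Suc l) * fact (Suc l))))"
      unfolding mmy_def by (subst sum.atMost_Suc_shift) simp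
    also have "(\<Sum>l\<le>j. sg (k - Suc l, j + m - l) (d * of_nat ((Suc j choose Suc l) * (k choose Suc l) * fact (Suc l))))
      = (\<Sum>l\<le>j. sg (k - Suc l, j + m - l) (d * of_nat ((j choose l) * (k choose Suc l) * fact (Suc l))))
       + (\<Sum>l\<le>j. sg (k - Suc l, j + m - l) (d * of_nat ((j choose Suc l) * (k choose Suc l) * fact (Suc l))))"
      unfolding sum.distrib[symmetric] single_add[symmetric]
      by (rule sum.cong[OF refl]) (simp only: binomial_Suc_Suc add_mult_distrib of_nat_add distrib_left)
    also have "(\<Sum>l\<le>Suc j. sg (k - l, Suc j + m - l) (d * of_nat ((j choose l) * (k choose l) * fact l)))
       = sg (k, Suc j + m) d + (\<Sum>l\<le>j. sg (k - Suc l, j + m - l) (d * of_nat ((j choose Suc l) * (k choose Suc l) * fact (Suc l))))"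
      by (subst sum.atMost_Suc_shift) simp
    ultimately show ?thesis by (simp add: algebra_simps)
  qed
  finally show ?thesis .
qed

lemma Ly_pow_single: "((\<lambda>u. weyl_y \<cdot>\<^sub>W u) ^^ j) (sg (k,m) d) = mm (0,j) (k,m) d"
proof (induction j)
  case 0
  then show ?case by (simp add: mm_def)
next
  case (Suc j)
  then show ?case by (simp add: mm_mmy y_mmy)
qed

lemma Lx_pow_single: "((\<lambda>u. weyl_x \<cdot>\<^sub>W u) ^^ i) (sg (k,m) d) = sg (k + i, m) d"
  by (induction i) (auto simp: x_mult_single)

lemma Lx_pow_sum: "((\<lambda>u. weyl_x \<cdot>\<^sub>W u) ^^ i) (\<Sum>l\<in>S. f l) = (\<Sum>l\<in>S. ((\<lambda>u. weyl_x \<cdot>\<^sub>W u) ^^ i) (f l))"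
  by (induction i) (auto simp: weyl_mult_sum)

lemma Ly_pow_sum: "((\<lambda>u. weyl_y \<cdot>\<^sub>W u) ^^ i) (\<Sum>l\<in>S. f l) = (\<Sum>l\<in>S. ((\<lambda>u. weyl_y \<cdot>\<^sub>W u) ^^ i) (f l))"
  by (induction i) (auto simp: weyl_mult_sum)

lemma Lx_pow_smult: "((\<lambda>u. weyl_x \<cdot>\<^sub>W u) ^^ i) (weyl_smult c a) = weyl_smult c (((\<lambda>u. weyl_x \<cdot>\<^sub>W u) ^^ i) a)"
  by (induction i) (auto simp: weyl_mult_smult)

lemma Lx_pow_mm: "((\<lambda>u. weyl_x \<cdot>\<^sub>W u) ^^ i) (mm (0,j) (k,m) d) = mm (i,j) (k,m) d"
  unfolding mm_def by (simp add: Lx_pow_sum Lx_pow_single algebra_simps)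

lemma single_mult_Lpow: "sg (i,j) c \<cdot>\<^sub>W u
   = weyl_smult c (((\<lambda>u. weyl_x \<cdot>\<^sub>W u) ^^ i) (((\<lambda>u. weyl_y \<cdot>\<^sub>W u) ^^ j) u))"
proof -
  have "sg (i,j) c \<cdot>\<^sub>W u = (\<Sum>k\<in>ks u. sg (i,j) c \<cdot>\<^sub>W sg k (lk u k))"
    by (subst poly_mapping_sum_singles[symmetric, of u]) (simp add: weyl_mult_sum)
  also have "\<dots> = (\<Sum>k\<in>ks u. weyl_smult c (((\<lambda>u. weyl_x \<cdot>\<^sub>W u) ^^ i) (((\<lambda>u. weyl_y \<cdot>\<^sub>W u) ^^ j) (sg k (lk u k)))))"
    by (rule sum.cong[OF refl]) (auto simp: single_mult_single Ly_pow_single Lx_pow_mm wsmult_mm)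
  also have "\<dots> = weyl_smult c (((\<lambda>u. weyl_x \<cdot>\<^sub>W u) ^^ i) (((\<lambda>u. weyl_y \<cdot>\<^sub>W u) ^^ j) u))"
    by (subst (2) poly_mapping_sum_singles[symmetric, of u]) (simp add: Ly_pow_sum Lx_pow_sum wsmult_sum)
  finally show ?thesis .
qed



abbreviation Lx :: "'a::field weyl \<Rightarrow> 'a weyl" where "Lx \<equiv> (\<lambda>u. weyl_x \<cdot>\<^sub>W u)"
abbreviation Ly :: "'a::field weyl \<Rightarrow> 'a weyl" where "Ly \<equiv> (\<lambda>u. weyl_y \<cdot>\<^sub>W u)"

lemma weyl_linear_left:
  fixes a :: "'a::field weyl"
  assumes "\<And>k d. (sg k d) \<cdot>\<^sub>W b = f (sg k d)"
    and "\<And>(S :: (nat \<times> nat) set) g. f (\<Sum>l\<in>S. g l) = (\<Sum>l\<in>S. f (g l))"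
  shows "a \<cdot>\<^sub>W b = f a"
proof -
  have "a \<cdot>\<^sub>W b = (\<Sum>k\<in>ks a. sg k (lk a k)) \<cdot>\<^sub>W b" by (simp add: poly_mapping_sum_singles)
  also have "\<dots> = (\<Sum>k\<in>ks a. f (sg k (lk a k)))" by (simp add: weyl_sum_mult assms(1))
  also have "\<dots> = f (\<Sum>k\<in>ks a. sg k (lk a k))" by (rule sym, rule assms(2))
  finally show ?thesis by (simp add: poly_mapping_sum_singles)
qed

lemma weyl_eq_by_singles:
  fixes a :: "'a::field weyl"
  assumes "\<And>k d. f (sg k d) = g (sg k d)"
    and "\<And>(S :: (nat \<times> nat) set) h. f (\<Sum>l\<in>S. h l) = (\<Sum>l\<in>S. f (h l))"
    and "\<And>(S :: (nat \<times> nat) set) h. g (\<Sum>l\<in>S. h l) = (\<Sum>l\<in>S. g (h l))"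
  shows "f a = g a"
proof -
  have "f a = f (\<Sum>k\<in>ks a. sg k (lk a k))" by (simp add: poly_mapping_sum_singles)
  also have "\<dots> = (\<Sum>k\<in>ks a. f (sg k (lk a k)))" by (rule assms(2))
  also have "\<dots> = (\<Sum>k\<in>ks a. g (sg k (lk a k)))" using assms(1) by simp
  also have "\<dots> = g (\<Sum>k\<in>ks a. sg k (lk a k))" by (rule sym, rule assms(3))
  finally show ?thesis by (simp add: poly_mapping_sum_singles)
qed

lemma Lx_assoc: "(weyl_x \<cdot>\<^sub>W b) \<cdot>\<^sub>W c = weyl_x \<cdot>\<^sub>W (b \<cdot>\<^sub>W c)"
proof (rule weyl_eq_by_singles[where f = "\<lambda>b. (weyl_x \<cdot>\<^sub>W b) \<cdot>\<^sub>W c" and g = "\<lambda>b. weyl_x \<cdot>\<^sub>W (b \<cdot>\<^sub>W c)"])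
  fix k :: "nat \<times> nat" and d
  obtain i j where k: "k = (i,j)" by force
  show "(weyl_x \<cdot>\<^sub>W sg k d) \<cdot>\<^sub>W c = weyl_x \<cdot>\<^sub>W (sg k d \<cdot>\<^sub>W c)"
    unfolding k x_mult_single single_mult_Lpow by (simp add: weyl_mult_smult)
qed (simp_all add: weyl_mult_sum weyl_sum_mult)

lemma Ly_Lx: "weyl_y \<cdot>\<^sub>W (weyl_x \<cdot>\<^sub>W u) = weyl_x \<cdot>\<^sub>W (weyl_y \<cdot>\<^sub>W u) + u"
proof (rule weyl_eq_by_singles[where f = "\<lambda>u. weyl_y \<cdot>\<^sub>W (weyl_x \<cdot>\<^sub>W u)" and g = "\<lambda>u. weyl_x \<cdot>\<^sub>W (weyl_y \<cdot>\<^sub>W u) + u"])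
  fix k :: "nat \<times> nat" and d :: 'a
  obtain a b where k: "k = (a,b)" by force
  show "weyl_y \<cdot>\<^sub>W (weyl_x \<cdot>\<^sub>W sg k d) = weyl_x \<cdot>\<^sub>W (weyl_y \<cdot>\<^sub>W sg k d) + sg k d"
    unfolding k by (cases a) (simp_all add: x_mult_single y_mult_single weyl_mult_add single_add[symmetric] algebra_simps)
qed (simp_all add: weyl_mult_sum sum.distrib)

lemma Ly_Lx_pow: "weyl_y \<cdot>\<^sub>W ((Lx ^^ k) u) = (Lx ^^ k) (weyl_y \<cdot>\<^sub>W u) + weyl_smult (of_nat k) ((Lx ^^ (k - 1)) u)"
proof (induction k)
  case 0
  then show ?case by simp
next
  case (Suc k)
  have "weyl_y \<cdot>\<^sub>W ((Lx ^^ Suc k) u) = weyl_x \<cdot>\<^sub>W (weyl_y \<cdot>\<^sub>W (Lx ^^ k) u) + (Lx ^^ k) u"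
    by (simp add: Ly_Lx)
  also have "\<dots> = (Lx ^^ Suc k) (weyl_y \<cdot>\<^sub>W u) + weyl_x \<cdot>\<^sub>W weyl_smult (of_nat k) ((Lx ^^ (k - 1)) u) + (Lx ^^ k) u"
    by (simp add: Suc weyl_mult_add)
  also have "weyl_x \<cdot>\<^sub>W weyl_smult (of_nat k) ((Lx ^^ (k - 1)) u) = weyl_smult (of_nat k) ((Lx ^^ k) u)"
    by (cases k) (simp_all add: weyl_mult_smult)
  finally show ?case by (simp add: wsmult_add_left add.assoc algebra_simps)
qed

lemma Ly_assoc: "(weyl_y \<cdot>\<^sub>W b) \<cdot>\<^sub>W c = weyl_y \<cdot>\<^sub>W (b \<cdot>\<^sub>W c)"
proof (rule weyl_eq_by_singles[where f = "\<lambda>b. (weyl_y \<cdot>\<^sub>W b) \<cdot>\<^sub>W c" and g = "\<lambda>b. weyl_y \<cdot>\<^sub>W (b \<cdot>\<^sub>W c)"])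
  fix k :: "nat \<times> nat" and d
  obtain i j where k: "k = (i,j)" by force
  show "(weyl_y \<cdot>\<^sub>W sg k d) \<cdot>\<^sub>W c = weyl_y \<cdot>\<^sub>W (sg k d \<cdot>\<^sub>W c)"
    unfolding k y_mult_single weyl_add_mult single_mult_Lpow
    by (simp add: weyl_mult_smult Ly_Lx_pow wsmult_add algebra_simps)
qed (simp_all add: weyl_mult_sum weyl_sum_mult)

lemma Lpow_assoc: "((Lx ^^ i) ((Ly ^^ j) b)) \<cdot>\<^sub>W c = (Lx ^^ i) ((Ly ^^ j) (b \<cdot>\<^sub>W c))"
proof -
  have "((Ly ^^ j) b) \<cdot>\<^sub>W c = (Ly ^^ j) (b \<cdot>\<^sub>W c)" for b
    by (induction j) (simp_all add: Ly_assoc)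
  then show ?thesis by (induction i) (simp_all add: Lx_assoc)
qed

lemma weyl_assoc: "(a \<cdot>\<^sub>W b) \<cdot>\<^sub>W c = a \<cdot>\<^sub>W (b \<cdot>\<^sub>W c)"
proof (rule weyl_eq_by_singles[where f = "\<lambda>a. (a \<cdot>\<^sub>W b) \<cdot>\<^sub>W c" and g = "\<lambda>a. a \<cdot>\<^sub>W (b \<cdot>\<^sub>W c)"])
  fix k :: "nat \<times> nat" and d
  obtain i j where k: "k = (i,j)" by force
  show "(sg k d \<cdot>\<^sub>W b) \<cdot>\<^sub>W c = sg k d \<cdot>\<^sub>W (b \<cdot>\<^sub>W c)"
    unfolding k single_mult_Lpow by (simp add: weyl_smult_mult Lpow_assoc)
qed (simp_all add: weyl_sum_mult)



abbreviation wp :: "'a::field poly \<Rightarrow> 'a weyl" where "wp \<equiv> weyl_of_poly"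
abbreviation Yp :: "nat \<Rightarrow> 'a::field weyl" where "Yp n \<equiv> weyl_pow weyl_y n"
abbreviation Xp :: "nat \<Rightarrow> 'a::field weyl" where "Xp n \<equiv> weyl_pow weyl_x n"

lemma weyl_eqI: "(\<And>i j. lk a (i,j) = lk b (i,j)) \<Longrightarrow> a = b"
  by (rule poly_mapping_eqI) (metis prod.collapse)

lemma psmult_sum: "smult c (\<Sum>i\<in>S. f i) = (\<Sum>i\<in>S. smult c (f i))"
  by (induction S rule: infinite_finite_induct) (auto simp: smult_add_right)

lemma lookup_wp: "lk (wp f) (i,j) = (if j = 0 then coeff f i else 0)"
  unfolding weyl_of_poly_def
  by (auto simp: lookup_sum lookup_single when_def coeff_eq_0 not_le)

lemma wp_eq_iff: "wp f = wp g \<longleftrightarrow> f = g"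
proof
  assume "wp f = wp g"
  then have "coeff f i = coeff g i" for i using lookup_wp[of f i 0] lookup_wp[of g i 0] by simp
  then show "f = g" by (simp add: poly_eq_iff)
qed simp

lemma wp_add: "wp (f + g) = wp f + wp g"
  by (rule weyl_eqI) (auto simp: lookup_add lookup_wp)

lemma wp_0[simp]: "wp 0 = 0"
  by (rule weyl_eqI) (auto simp: lookup_wp)

lemma wp_uminus: "wp (- f) = - wp f"
  by (rule weyl_eqI) (auto simp: lookup_wp)

lemma wp_diff: "wp (f - g) = wp f - wp g"
  by (rule weyl_eqI) (auto simp: lookup_minus lookup_wp)

lemma wp_smult: "wp (smult c f) = weyl_smult c (wp f)"
  by (rule weyl_eqI) (auto simp: lookup_wp)

lemma wp_sum: "wp (\<Sum>i\<in>S. f i) = (\<Sum>i\<in>S. wp (f i))"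
  by (induction S rule: infinite_finite_induct) (auto simp: wp_add)

lemma wp_monom: "wp (monom c k) = sg (k,0) c"
  by (rule weyl_eqI) (auto simp: lookup_wp lookup_single when_def)

lemma wp_1: "wp 1 = weyl_one"
  using wp_monom[of 1 0] by (simp add: weyl_one_def monom_0 one_pCons)

lemma wp_const: "wp [:c:] = weyl_smult c weyl_one"
  using wp_monom[of c 0] by (simp add: weyl_one_def monom_0 wsmult_single)

lemma lookup_Xmult: "lk (weyl_x \<cdot>\<^sub>W u) (i,j) = (if i = 0 then 0 else lk u (i - 1, j))"
  by (rule weyl_eq_by_singles[where f = "\<lambda>u. lk (weyl_x \<cdot>\<^sub>W u) (i,j)" and g = "\<lambda>u. (if i = 0 then 0 else lk u (i - 1, j))"])
     (auto simp: x_mult_single lookup_single when_def weyl_mult_sum lookup_sum split: if_splits)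

lemma wp_x_mult: "wp ([:0,1:] * f) = weyl_x \<cdot>\<^sub>W wp f"
  by (rule weyl_eqI) (auto simp: lookup_Xmult lookup_wp coeff_pCons split: nat.split)

lemma wp_pCons: "wp (pCons a f) = weyl_smult a weyl_one + weyl_x \<cdot>\<^sub>W wp f"
proof -
  have eq: "pCons a f = [:a:] + [:0,1:] * f" by (simp add: poly_eq_iff coeff_pCons split: nat.split)
  show ?thesis by (subst eq) (simp only: wp_add wp_const wp_x_mult)
qed

lemma wp_mult: "wp (f * g) = wp f \<cdot>\<^sub>W wp g"
proof (induction f)
  case 0
  then show ?case by simp
next
  case (pCons a f)
  have "pCons a f * g = smult a g + [:0,1:] * (f * g)"
    by (simp add: algebra_simps)
  then show ?case
    by (simp add: wp_add wp_smult wp_x_mult pCons wp_pCons weyl_add_mult weyl_smult_mult weyl_assoc)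
qed

lemma wp_x: "wp [:0,1:] = weyl_x"
  using wp_monom[of 1 1] by (simp add: weyl_x_def monom_Suc monom_0 one_pCons)

lemma weyl_pow_add: "weyl_pow a (m + n) = weyl_pow a m \<cdot>\<^sub>W weyl_pow a n"
  by (induction m) (auto simp: weyl_assoc)

lemma weyl_pow_Suc_right: "weyl_pow a (Suc n) = weyl_pow a n \<cdot>\<^sub>W a"
  using weyl_pow_add[of a n 1] by simp

lemma wp_power: "wp (f ^ n) = weyl_pow (wp f) n"
  by (induction n) (auto simp: wp_1 wp_mult)

lemma Xp_wp: "Xp n = wp (monom 1 n)"
proof -
  have "monom (1::'a) n = [:0,1:] ^ n" by (simp add: monom_altdef)
  then show ?thesis by (simp add: wp_power wp_x)
qed

lemma Xp_single: "Xp n = sg (n,0) 1"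
  by (simp add: Xp_wp wp_monom)

lemma Yp_single: "Yp n = sg (0,n) 1"
proof (induction n)
  case 0
  then show ?case by (simp add: weyl_one_def)
next
  case (Suc n)
  then show ?case by (simp add: weyl_y_def single_mult_single mm_def)
qed

lemma wp_Yp: "wp g \<cdot>\<^sub>W Yp m = (\<Sum>i\<le>degree g. sg (i,m) (coeff g i))"
  unfolding weyl_of_poly_def Yp_single weyl_sum_mult
  by (simp add: single_mult_single mm_def)

lemma lookup_wp_Yp: "lk (wp g \<cdot>\<^sub>W Yp m) (i,j) = (if j = m then coeff g i else 0)"
  unfolding wp_Yp by (auto simp: lookup_sum lookup_single when_def coeff_eq_0 not_le)

lemma higher_pderiv_monom': "(pderiv ^^ l) (monom c k) = monom (of_nat ((k choose l) * fact l) * c) (k - l)"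
proof (induction l)
  case 0
  then show ?case by simp
next
  case (Suc l)
  have "(pderiv ^^ Suc l) (monom c k) = pderiv ((pderiv ^^ l) (monom c k))" by simp
  also have "\<dots> = monom (of_nat (k - l) * (of_nat ((k choose l) * fact l) * c)) (k - Suc l)"
    by (simp add: Suc pderiv_monom)
  also have "of_nat (k - l) * (of_nat ((k choose l) * fact l) * c) = of_nat ((k choose Suc l) * fact (Suc l)) * c"
  proof -
    have eq: "(of_nat ((k choose Suc l) * fact (Suc l)) :: 'a) = of_nat (k-l) * of_nat ((k choose l) * fact l)"
      by (metis choose_fact_Suc mult.commute of_nat_mult)
    show ?thesis unfolding eq by (simp only: mult_ac)
  qed
  finally show ?case .
qed

lemma leibniz_monom: "Yp n \<cdot>\<^sub>W wp (monom c k) =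
   (\<Sum>l\<le>n. wp (smult (of_nat (n choose l)) ((pderiv ^^ l) (monom c k))) \<cdot>\<^sub>W Yp (n - l))"
proof -
  have "Yp n \<cdot>\<^sub>W wp (monom c k) = (\<Sum>l\<le>min n k. sg (k - l, n - l) (c * of_nat ((n choose l) * (k choose l) * fact l)))"
    by (simp add: Yp_single wp_monom single_mult_single mm_def)
  also have "\<dots> = (\<Sum>l\<le>n. sg (k - l, n - l) (c * of_nat ((n choose l) * (k choose l) * fact l)))"
    by (rule sum.mono_neutral_left, auto, metis binomial_eq_0 not_le of_nat_0 mult_zero_left mult_zero_right single_zero)
  also have "\<dots> = (\<Sum>l\<le>n. wp (smult (of_nat (n choose l)) ((pderiv ^^ l) (monom c k))) \<cdot>\<^sub>W Yp (n - l))"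
    by (rule sum.cong[OF refl]) (simp add: higher_pderiv_monom' smult_monom wp_monom Yp_single single_mult_single mm_def mult_ac)
  finally show ?thesis .
qed

lemma leibniz: "Yp n \<cdot>\<^sub>W wp u = (\<Sum>l\<le>n. wp (smult (of_nat (n choose l)) ((pderiv ^^ l) u)) \<cdot>\<^sub>W Yp (n - l))"
proof -
  have "Yp n \<cdot>\<^sub>W wp u = Yp n \<cdot>\<^sub>W wp (\<Sum>i\<le>degree u. monom (coeff u i) i)" by (simp add: poly_as_sum_of_monoms)
  also have "\<dots> = (\<Sum>i\<le>degree u. \<Sum>l\<le>n. wp (smult (of_nat (n choose l)) ((pderiv ^^ l) (monom (coeff u i) i))) \<cdot>\<^sub>W Yp (n - l))"
    by (simp add: wp_sum weyl_mult_sum leibniz_monom)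
  also have "\<dots> = (\<Sum>l\<le>n. wp (smult (of_nat (n choose l)) ((pderiv ^^ l) (\<Sum>i\<le>degree u. monom (coeff u i) i))) \<cdot>\<^sub>W Yp (n - l))"
    by (subst sum.swap) (simp add: higher_pderiv_sum psmult_sum wp_sum weyl_sum_mult)
  finally show ?thesis by (simp add: poly_as_sum_of_monoms)
qed

lemma Y_wp: "weyl_y \<cdot>\<^sub>W wp u = wp u \<cdot>\<^sub>W weyl_y + wp (pderiv u)"
proof -
  have "Yp 1 \<cdot>\<^sub>W wp u = wp u \<cdot>\<^sub>W Yp 1 + wp (pderiv u) \<cdot>\<^sub>W Yp 0"
    by (subst leibniz) (simp add: atMost_Suc)
  then show ?thesis by simp
qed



definition cy :: "'a::field weyl \<Rightarrow> nat \<Rightarrow> 'a poly" where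
  "cy a m = (\<Sum>k\<in>ks a. if snd k = m then monom (lk a k) (fst k) else 0)"

lemma coeff_cy: "coeff (cy a m) i = lk a (i,m)"
proof -
  have "coeff (cy a m) i = (\<Sum>k\<in>ks a. if k = (i,m) then lk a k else 0)"
    unfolding cy_def coeff_sum by (rule sum.cong) auto
  also have "\<dots> = lk a (i,m)" by (auto simp: in_keys_iff)
  finally show ?thesis .
qed

lemma cy_add: "cy (a + b) m = cy a m + cy b m"
  by (simp add: poly_eq_iff coeff_cy lookup_add)

lemma cy_diff: "cy (a - b) m = cy a m - cy b m"
  by (simp add: poly_eq_iff coeff_cy lookup_minus)

lemma cy_uminus: "cy (- a) m = - cy a m"
  by (simp add: poly_eq_iff coeff_cy)

lemma cy_0[simp]: "cy 0 m = 0"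
  by (simp add: poly_eq_iff coeff_cy)

lemma cy_smult: "cy (weyl_smult c a) m = smult c (cy a m)"
  by (simp add: poly_eq_iff coeff_cy)

lemma cy_sum: "cy (\<Sum>i\<in>S. f i) m = (\<Sum>i\<in>S. cy (f i) m)"
  by (induction S rule: infinite_finite_induct) (auto simp: cy_add)

lemma cy_wp_Yp: "cy (wp q \<cdot>\<^sub>W Yp k) m = (if m = k then q else 0)"
  by (simp add: poly_eq_iff coeff_cy lookup_wp_Yp)

lemma cy_eq_0_imp: "(\<And>m. cy a m = 0) \<Longrightarrow> a = 0"
  by (rule weyl_eqI) (metis coeff_cy coeff_0 lookup_zero)

lemma cy_inj: "(\<And>m. cy a m = cy b m) \<Longrightarrow> a = b"
  using cy_eq_0_imp[of "a - b"] by (simp add: cy_diff)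

definition ydeg :: "'a::field weyl \<Rightarrow> nat" where
  "ydeg a = Max (insert 0 (snd ` ks a))"

lemma cy_beyond: "m > ydeg a \<Longrightarrow> cy a m = 0"
proof -
  assume m: "m > ydeg a"
  have "lk a (i,m) = 0" for i
  proof (rule ccontr)
    assume "lk a (i,m) \<noteq> 0"
    then have "m \<in> snd ` ks a" by (force simp: in_keys_iff)
    then have "m \<le> ydeg a" unfolding ydeg_def by (simp add: finite_keys)
    with m show False by simp
  qed
  then show ?thesis by (simp add: poly_eq_iff coeff_cy)
qed

lemma normal_form: "ydeg a \<le> N \<Longrightarrow> a = (\<Sum>m\<le>N. wp (cy a m) \<cdot>\<^sub>W Yp m)"
proof (rule cy_inj)
  fix n assume N: "ydeg a \<le> N"
  show "cy a n = cy (\<Sum>m\<le>N. wp (cy a m) \<cdot>\<^sub>W Yp m) n"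
    using cy_beyond[of a n] N by (auto simp: cy_sum cy_wp_Yp)
qed

lemma cy_sum_wp_Yp: "finite S \<Longrightarrow> cy (\<Sum>m\<in>S. wp (q m) \<cdot>\<^sub>W Yp m) n = (if n \<in> S then q n else 0)"
  by (simp add: cy_sum cy_wp_Yp)

lemma single_eq_XY: "sg (i,j) c = weyl_smult c (Xp i \<cdot>\<^sub>W Yp j)"
  by (simp add: Xp_single Yp_single single_mult_single mm_def wsmult_single)

lemma single_mult_X: "sg (k,m) c \<cdot>\<^sub>W weyl_x = sg (Suc k, m) c + sg (k, m - 1) (of_nat m * c)"
proof (cases m)
  case 0
  then show ?thesis by (simp add: weyl_x_def single_mult_single mm_def)
next
  case (Suc m')
  have "{..Suc 0} = {0, Suc 0}" by auto
  then show ?thesis using Suc by (simp add: weyl_x_def single_mult_single mm_def mult.commute)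
qed

lemma lookup_single_multX: "lk (sg k c \<cdot>\<^sub>W weyl_x) (i,j) = (if i = 0 then 0 else lk (sg k c) (i - 1, j)) + of_nat (Suc j) * lk (sg k c) (i, Suc j)"
proof -
  obtain a b where k: "k = (a,b)" by force
  show ?thesis unfolding k single_mult_X lookup_add
    by (cases b; cases i) (auto simp: lookup_single when_def)
qed

lemma lookup_multX: "lk (u \<cdot>\<^sub>W weyl_x) (i,j) = (if i = 0 then 0 else lk u (i - 1, j)) + of_nat (Suc j) * lk u (i, Suc j)"
proof (rule weyl_eq_by_singles[where f = "\<lambda>u. lk (u \<cdot>\<^sub>W weyl_x) (i,j)" and g = "\<lambda>u. (if i = 0 then 0 else lk u (i - 1, j)) + of_nat (Suc j) * lk u (i, Suc j)"])
  show "\<And>k d. lk (sg k d \<cdot>\<^sub>W weyl_x) (i,j) = (if i = 0 then 0 else lk (sg k d) (i - 1, j)) + of_nat (Suc j) * lk (sg k d) (i, Suc j)"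
    by (rule lookup_single_multX)
  show "\<And>S h. lk ((\<Sum>l\<in>S. h l) \<cdot>\<^sub>W weyl_x) (i,j) = (\<Sum>l\<in>S. lk (h l \<cdot>\<^sub>W weyl_x) (i,j))"
    by (simp only: weyl_sum_mult lookup_sum)
  show "\<And>S h. (if i = 0 then 0 else lk (\<Sum>l\<in>S. h l) (i - 1, j)) + of_nat (Suc j) * lk (\<Sum>l\<in>S. h l) (i, Suc j)
     = (\<Sum>l\<in>S. (if i = 0 then 0 else lk (h l) (i - 1, j)) + of_nat (Suc j) * lk (h l) (i, Suc j))"
    by (cases "i = 0") (simp_all add: lookup_sum sum.distrib sum_distrib_left)
qed

lemma lookup_commX: "lk (weyl_x \<cdot>\<^sub>W u - u \<cdot>\<^sub>W weyl_x) (i,j) = - (of_nat (Suc j) * lk u (i, Suc j))"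
  by (simp add: lookup_minus lookup_Xmult lookup_multX)

lemma central_if_XY:
  assumes "u \<cdot>\<^sub>W weyl_x = weyl_x \<cdot>\<^sub>W u" "u \<cdot>\<^sub>W weyl_y = weyl_y \<cdot>\<^sub>W u"
  shows "u \<cdot>\<^sub>W a = a \<cdot>\<^sub>W u"
proof -
  have gen: "u \<cdot>\<^sub>W weyl_pow v i = weyl_pow v i \<cdot>\<^sub>W u" if "u \<cdot>\<^sub>W v = v \<cdot>\<^sub>W u" for v i
  proof (induction i)
    case (Suc i)
    have "u \<cdot>\<^sub>W weyl_pow v (Suc i) = (u \<cdot>\<^sub>W v) \<cdot>\<^sub>W weyl_pow v i" by (simp add: weyl_assoc)
    also have "\<dots> = v \<cdot>\<^sub>W (u \<cdot>\<^sub>W weyl_pow v i)" unfolding that by (rule weyl_assoc)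
    also have "\<dots> = v \<cdot>\<^sub>W (weyl_pow v i \<cdot>\<^sub>W u)" unfolding Suc ..
    also have "\<dots> = weyl_pow v (Suc i) \<cdot>\<^sub>W u" by (simp add: weyl_assoc)
    finally show ?case .
  qed simp
  have cs: "u \<cdot>\<^sub>W sg k d = sg k d \<cdot>\<^sub>W u" for k d
  proof -
    obtain i j where k: "k = (i,j)" by force
    have "u \<cdot>\<^sub>W (Xp i \<cdot>\<^sub>W Yp j) = (u \<cdot>\<^sub>W Xp i) \<cdot>\<^sub>W Yp j" by (rule weyl_assoc[symmetric])
    also have "\<dots> = Xp i \<cdot>\<^sub>W (u \<cdot>\<^sub>W Yp j)" unfolding gen[OF assms(1)] by (rule weyl_assoc)
    also have "\<dots> = (Xp i \<cdot>\<^sub>W Yp j) \<cdot>\<^sub>W u" unfolding gen[OF assms(2)] by (rule weyl_assoc[symmetric])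
    finally show ?thesis unfolding k single_eq_XY weyl_mult_smult weyl_smult_mult by simp
  qed
  show ?thesis
    by (rule weyl_eq_by_singles[where f = "\<lambda>a. u \<cdot>\<^sub>W a" and g = "\<lambda>a. a \<cdot>\<^sub>W u"])
       (simp_all add: cs weyl_mult_sum weyl_sum_mult)
qed

lemma pderiv2_x:
  assumes "l \<ge> 2" shows "(pderiv ^^ l) [:0, 1::'a::field:] = 0"
proof -
  define l' where "l' = l - 2"
  have l: "l = Suc (Suc l')" using assms unfolding l'_def by simp
  have "(pderiv ^^ Suc (Suc l')) [:0, 1::'a:] = (pderiv ^^ l') (pderiv (pderiv [:0, 1:]))"
    by (simp del: funpow.simps add: funpow_Suc_right)
  also have "pderiv (pderiv [:0, 1::'a:]) = 0" by (simp add: pderiv_pCons)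
  finally show ?thesis using l by simp
qed

lemma Yp_X: "(Yp n :: 'a::field weyl) \<cdot>\<^sub>W weyl_x = weyl_x \<cdot>\<^sub>W Yp n + weyl_smult (of_nat n) (Yp (n - 1))"
proof (cases "n = 0")
  case True
  then show ?thesis by simp
next
  case False
  have "(Yp n :: 'a weyl) \<cdot>\<^sub>W wp [:0,1:] = (\<Sum>l\<le>n. wp (smult (of_nat (n choose l)) ((pderiv ^^ l) [:0,1:])) \<cdot>\<^sub>W Yp (n - l))"
    by (rule leibniz)
  also have "\<dots> = (\<Sum>l\<in>{0, 1}. wp (smult (of_nat (n choose l)) ((pderiv ^^ l) [:0,1:])) \<cdot>\<^sub>W Yp (n - l))"
  proof (rule sum.mono_neutral_right)
    show "\<forall>i\<in>{..n} - {0, 1}. wp (smult (of_nat (n choose i)) ((pderiv ^^ i) [:0, 1:])) \<cdot>\<^sub>W Yp (n - i) = (0::'a weyl)"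
    proof
      fix i assume "i \<in> {..n} - {0, 1}"
      then have "2 \<le> i" by auto
      then have "(pderiv ^^ i) [:0, 1::'a:] = 0" by (rule pderiv2_x)
      then show "wp (smult (of_nat (n choose i)) ((pderiv ^^ i) [:0, 1:])) \<cdot>\<^sub>W Yp (n - i) = (0::'a weyl)" by simp
    qed
    show "{0, 1} \<subseteq> {..n}" using False by auto
  qed simp
  also have "\<dots> = wp [:0,1:] \<cdot>\<^sub>W Yp n + wp [:of_nat n:] \<cdot>\<^sub>W Yp (n - 1)"
    by (simp add: pderiv_pCons)
  also have "\<dots> = weyl_x \<cdot>\<^sub>W Yp n + weyl_smult (of_nat n) (Yp (n - 1))"
    by (simp only: wp_x wp_const weyl_smult_mult weyl_one_mult)
  finally show ?thesis by (simp only: wp_x)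
qed



lemma subalg_zero: "0 \<in> weyl_subalg S"
  using weyl_subalg.smult[OF weyl_subalg.one, where c = 0] by simp

lemma subalg_uminus: "a \<in> weyl_subalg S \<Longrightarrow> - a \<in> weyl_subalg S"
  using weyl_subalg.smult[where a = a and c = "-1"] by (simp add: wsmult_neg1)

lemma subalg_diff: "a \<in> weyl_subalg S \<Longrightarrow> b \<in> weyl_subalg S \<Longrightarrow> a - b \<in> weyl_subalg S"
proof -
  assume "a \<in> weyl_subalg S" "b \<in> weyl_subalg S"
  then have "a + (- b) \<in> weyl_subalg S" by (intro weyl_subalg.add subalg_uminus)
  then show ?thesis by simp
qed

lemma subalg_sum: "(\<And>i. i \<in> I \<Longrightarrow> f i \<in> weyl_subalg S) \<Longrightarrow> (\<Sum>i\<in>I. f i) \<in> weyl_subalg S"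
  by (induction I rule: infinite_finite_induct) (auto intro: subalg_zero weyl_subalg.add)

lemma subalg_pow: "a \<in> weyl_subalg S \<Longrightarrow> weyl_pow a n \<in> weyl_subalg S"
  by (induction n) (auto intro: weyl_subalg.one weyl_subalg.mult)

lemma x_in_A: "weyl_x \<in> A_h h"
  unfolding A_h_def by (auto intro: weyl_subalg.gen)

lemma yhat_in_A: "yhat h \<in> A_h h"
  unfolding A_h_def by (auto intro: weyl_subalg.gen)

lemma wp_in_A: "wp f \<in> A_h h"
proof (induction f)
  case 0
  then show ?case by (simp add: A_h_def subalg_zero)
next
  case (pCons a f)
  then show ?case unfolding wp_pCons A_h_def
    by (intro weyl_subalg.add weyl_subalg.smult weyl_subalg.one weyl_subalg.mult)
       (auto intro: weyl_subalg.gen)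
qed

lemma A_mult: "a \<in> A_h h \<Longrightarrow> b \<in> A_h h \<Longrightarrow> a \<cdot>\<^sub>W b \<in> A_h h"
  unfolding A_h_def by (rule weyl_subalg.mult)

lemma A_add: "a \<in> A_h h \<Longrightarrow> b \<in> A_h h \<Longrightarrow> a + b \<in> A_h h"
  unfolding A_h_def by (rule weyl_subalg.add)

lemma A_diff: "a \<in> A_h h \<Longrightarrow> b \<in> A_h h \<Longrightarrow> a - b \<in> A_h h"
  unfolding A_h_def by (rule subalg_diff)

lemma A_smult: "a \<in> A_h h \<Longrightarrow> weyl_smult c a \<in> A_h h"
  unfolding A_h_def by (rule weyl_subalg.smult)

lemma A_sum: "(\<And>i. i \<in> I \<Longrightarrow> f i \<in> A_h h) \<Longrightarrow> (\<Sum>i\<in>I. f i) \<in> A_h h"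
  unfolding A_h_def by (rule subalg_sum)

lemma A_zero: "0 \<in> A_h h"
  unfolding A_h_def by (rule subalg_zero)

lemma A_one: "weyl_one \<in> A_h h"
  unfolding A_h_def by (rule weyl_subalg.one)

lemma Yp_add: "Yp (m + n) = Yp m \<cdot>\<^sub>W Yp n"
  by (rule weyl_pow_add)

lemma hy_in_A: "wp (h ^ j) \<cdot>\<^sub>W Yp j \<in> A_h h"
proof (induction j)
  case 0
  then show ?case by (simp add: wp_1 A_one)
next
  case (Suc j)
  have "yhat h \<cdot>\<^sub>W (wp (h ^ j) \<cdot>\<^sub>W Yp j) = weyl_y \<cdot>\<^sub>W wp (h ^ Suc j) \<cdot>\<^sub>W Yp j"
    by (simp add: yhat_def weyl_assoc wp_mult)
  also have "\<dots> = wp (h ^ Suc j) \<cdot>\<^sub>W Yp (Suc j) + wp (pderiv (h ^ Suc j)) \<cdot>\<^sub>W Yp j"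
    by (simp add: Y_wp weyl_add_mult weyl_assoc)
  finally have eq: "wp (h ^ Suc j) \<cdot>\<^sub>W Yp (Suc j) = yhat h \<cdot>\<^sub>W (wp (h ^ j) \<cdot>\<^sub>W Yp j) - wp (pderiv (h ^ Suc j)) \<cdot>\<^sub>W Yp j"
    by (simp add: algebra_simps)
  have "wp (pderiv (h ^ Suc j)) \<cdot>\<^sub>W Yp j = weyl_smult (of_nat (Suc j)) (wp (pderiv h) \<cdot>\<^sub>W (wp (h ^ j) \<cdot>\<^sub>W Yp j))"
    by (simp add: pderiv_power_Suc wp_smult wp_mult weyl_smult_mult weyl_assoc mult.commute del: power_Suc)
  then show ?case unfolding eq
    by (auto intro!: A_diff A_mult A_smult yhat_in_A wp_in_A Suc)
qed

section \<open>Divisibility of derivatives\<close>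

lemma dvd_pderiv_pow:
  fixes h u :: "'a::field poly"
  assumes "h ^ n dvd u" shows "h ^ (n - 1) dvd pderiv u"
proof (cases n)
  case 0
  then show ?thesis by simp
next
  case (Suc k)
  from assms obtain v where u: "u = h ^ n * v" by (elim dvdE)
  have "pderiv u = h ^ n * pderiv v + v * pderiv (h ^ n)"
    unfolding u by (rule pderiv_mult)
  also have "\<dots> = h ^ k * (h * pderiv v + v * smult (of_nat (Suc k)) (pderiv h))"
    unfolding Suc pderiv_power_Suc by (simp add: algebra_simps)
  finally show ?thesis using Suc by simp
qed

lemma dvd_higher_pderiv:
  fixes h u :: "'a::field poly"
  assumes "h ^ n dvd u" shows "h ^ (n - l) dvd (pderiv ^^ l) u"
proof (induction l)
  case 0
  then show ?case using assms by simp
next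
  case (Suc l)
  have "h ^ (n - l - 1) dvd pderiv ((pderiv ^^ l) u)" by (rule dvd_pderiv_pow[OF Suc])
  then show ?case by simp
qed

definition Bset :: "'a::field poly \<Rightarrow> 'a weyl set" where
  "Bset h = {a. \<forall>m. h ^ m dvd cy a m}"

lemma B_term: "h ^ k dvd q \<Longrightarrow> wp q \<cdot>\<^sub>W Yp k \<in> Bset h"
  by (auto simp: Bset_def cy_wp_Yp)

lemma B_add: "a \<in> Bset h \<Longrightarrow> b \<in> Bset h \<Longrightarrow> a + b \<in> Bset h"
  by (auto simp: Bset_def cy_add)

lemma B_zero: "0 \<in> Bset h"
  by (auto simp: Bset_def)

lemma B_sum: "(\<And>i. i \<in> I \<Longrightarrow> f i \<in> Bset h) \<Longrightarrow> (\<Sum>i\<in>I. f i) \<in> Bset h"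
  by (induction I rule: infinite_finite_induct) (auto intro: B_zero B_add)

lemma B_smult: "a \<in> Bset h \<Longrightarrow> weyl_smult c a \<in> Bset h"
  by (auto simp: Bset_def cy_smult intro: dvd_smult)

lemma term_mult_aux: "wp g \<cdot>\<^sub>W (wp s \<cdot>\<^sub>W (Yp a \<cdot>\<^sub>W Yp n)) = wp (g * s) \<cdot>\<^sub>W Yp (a + n)"
  by (simp only: wp_mult weyl_assoc Yp_add)

lemma term_mult: "(wp g \<cdot>\<^sub>W Yp m) \<cdot>\<^sub>W (wp f \<cdot>\<^sub>W Yp n)
   = (\<Sum>l\<le>m. wp (g * smult (of_nat (m choose l)) ((pderiv ^^ l) f)) \<cdot>\<^sub>W Yp (m - l + n))"
proof -
  have "(wp g \<cdot>\<^sub>W Yp m) \<cdot>\<^sub>W (wp f \<cdot>\<^sub>W Yp n) = wp g \<cdot>\<^sub>W ((Yp m \<cdot>\<^sub>W wp f) \<cdot>\<^sub>W Yp n)"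
    by (simp add: weyl_assoc)
  also have "\<dots> = (\<Sum>l\<le>m. wp (g * smult (of_nat (m choose l)) ((pderiv ^^ l) f)) \<cdot>\<^sub>W Yp (m - l + n))"
    by (simp only: leibniz weyl_sum_mult weyl_mult_sum weyl_assoc term_mult_aux)
  finally show ?thesis .
qed

lemma B_mult_term:
  fixes h :: "'a::field poly"
  assumes "h ^ m dvd g" "h ^ n dvd f"
  shows "(wp g \<cdot>\<^sub>W Yp m) \<cdot>\<^sub>W (wp f \<cdot>\<^sub>W Yp n) \<in> Bset h"
  unfolding term_mult
proof (rule B_sum, rule B_term)
  fix l assume "l \<in> {..m}"
  then have lm: "l \<le> m" by simp
  show "h ^ (m - l + n) dvd g * smult (of_nat (m choose l)) ((pderiv ^^ l) f)"
  proof (cases "l \<le> n")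
    case True
    have "h ^ (n - l) dvd (pderiv ^^ l) f" by (rule dvd_higher_pderiv[OF assms(2)])
    then have "h ^ m * h ^ (n - l) dvd g * smult (of_nat (m choose l)) ((pderiv ^^ l) f)"
      using assms(1) by (intro mult_dvd_mono dvd_smult)
    moreover have "h ^ m * h ^ (n - l) = h ^ (m - l + n)" using True lm by (simp add: power_add[symmetric])
    ultimately show ?thesis by simp
  next
    case False
    have "h ^ (m - l + n) dvd h ^ m" using False lm by (intro le_imp_power_dvd) simp
    then have "h ^ (m - l + n) dvd g" using assms(1) by (rule dvd_trans)
    then show ?thesis by (intro dvd_mult2)
  qed
qed

lemma B_mult:
  fixes h :: "'a::field poly"
  assumes "a \<in> Bset h" "b \<in> Bset h" shows "a \<cdot>\<^sub>W b \<in> Bset h"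
proof -
  have "a \<cdot>\<^sub>W b = (\<Sum>m\<le>ydeg a. wp (cy a m) \<cdot>\<^sub>W Yp m) \<cdot>\<^sub>W (\<Sum>n\<le>ydeg b. wp (cy b n) \<cdot>\<^sub>W Yp n)"
    using normal_form[of a "ydeg a"] normal_form[of b "ydeg b"] by simp
  also have "\<dots> = (\<Sum>m\<le>ydeg a. \<Sum>n\<le>ydeg b. (wp (cy a m) \<cdot>\<^sub>W Yp m) \<cdot>\<^sub>W (wp (cy b n) \<cdot>\<^sub>W Yp n))"
    by (subst weyl_sum_mult) (simp only: weyl_mult_sum)
  also have "\<dots> \<in> Bset h"
    using assms by (intro B_sum B_mult_term) (auto simp: Bset_def)
  finally show ?thesis .
qed

lemma A_sub_B: "A_h h \<subseteq> Bset h"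
proof
  fix a assume "a \<in> A_h h"
  then show "a \<in> Bset h" unfolding A_h_def
  proof (induction rule: weyl_subalg.induct)
    case (gen s)
    then consider "s = weyl_x" | "s = yhat h" by auto
    then show ?case
    proof cases
      case 1
      show ?thesis using 1 B_term[of h 0 "[:0,1:]"] by (simp add: wp_x)
    next
      case 2
      have "yhat h = wp h \<cdot>\<^sub>W Yp 1 + wp (pderiv h) \<cdot>\<^sub>W Yp 0"
        by (simp add: yhat_def Y_wp)
      then show ?thesis using 2 B_add[OF B_term[of h 1 h] B_term[of h 0 "pderiv h"]] by simp
    qed
  next
    case one
    show ?case using B_term[of h 0 1] by (simp add: wp_1)
  next
    case (add a b)
    then show ?case by (intro B_add add.IH)
  next
    case (smult a c)
    then show ?case by (intro B_smult smult.IH)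
  next
    case (mult a b)
    then show ?case by (intro B_mult mult.IH)
  qed
qed

lemma B_sub_A: "Bset h \<subseteq> A_h h"
proof
  fix a assume a: "a \<in> Bset h"
  have "a = (\<Sum>m\<le>ydeg a. wp (cy a m) \<cdot>\<^sub>W Yp m)" by (rule normal_form) simp
  also have "\<dots> \<in> A_h h"
  proof (rule A_sum)
    fix m
    from a have "h ^ m dvd cy a m" unfolding Bset_def by blast
    then obtain g where "cy a m = h ^ m * g" by (elim dvdE)
    then have g: "cy a m = g * h ^ m" by (simp add: mult.commute)
    show "wp (cy a m) \<cdot>\<^sub>W Yp m \<in> A_h h"
      unfolding g wp_mult weyl_assoc by (intro A_mult wp_in_A hy_in_A)
  qed
  finally show "a \<in> A_h h" .
qed

lemma A_eq_B: "A_h h = Bset h"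
  using A_sub_B B_sub_A by blast



lemma Yp_Y: "Yp n \<cdot>\<^sub>W weyl_y = weyl_y \<cdot>\<^sub>W (Yp n :: 'a::field weyl)"
  using weyl_pow_Suc_right[of "weyl_y :: 'a weyl" n] by simp

lemma Yp_central:
  assumes "CHAR('a::field) dvd n"
  shows "(Yp n :: 'a weyl) \<cdot>\<^sub>W a = a \<cdot>\<^sub>W Yp n"
proof (rule central_if_XY)
  have "(of_nat n :: 'a) = 0" using assms by (simp add: of_nat_eq_0_iff_char_dvd)
  then show "(Yp n :: 'a weyl) \<cdot>\<^sub>W weyl_x = weyl_x \<cdot>\<^sub>W Yp n" by (simp add: Yp_X)
qed (rule Yp_Y)

lemma wp_central:
  assumes "pderiv c = 0"
  shows "wp c \<cdot>\<^sub>W a = a \<cdot>\<^sub>W wp c"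
proof (rule central_if_XY)
  show "wp c \<cdot>\<^sub>W weyl_x = weyl_x \<cdot>\<^sub>W wp c"
    by (simp add: wp_x[symmetric] wp_mult[symmetric] mult.commute)
  show "wp c \<cdot>\<^sub>W weyl_y = weyl_y \<cdot>\<^sub>W wp c"
    by (simp add: Y_wp assms)
qed

lemma pderiv_pow_char:
  assumes "CHAR('a::field) dvd n"
  shows "pderiv ((h :: 'a poly) ^ n) = 0"
proof -
  have "(of_nat n :: 'a) = 0" using assms by (simp add: of_nat_eq_0_iff_char_dvd)
  then show ?thesis by (simp add: pderiv_power)
qed

lemma pderiv_zero_coeff:
  assumes "pderiv (c :: 'a::field poly) = 0" "coeff c t \<noteq> 0"
  shows "CHAR('a) dvd t"
proof (cases t)
  case 0
  then show ?thesis by simp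
next
  case (Suc t')
  have "coeff (pderiv c) t' = of_nat (Suc t') * coeff c (Suc t')" by (rule coeff_pderiv)
  then have "(of_nat (Suc t') :: 'a) = 0" using assms Suc by simp
  then have "CHAR('a) dvd Suc t'" by (simp only: of_nat_eq_0_iff_char_dvd)
  with Suc show ?thesis by simp
qed

definition Z1set :: "'a::field weyl set" where
  "Z1set = {z. \<forall>m. cy z m \<noteq> 0 \<longrightarrow> CHAR('a) dvd m \<and> pderiv (cy z m) = 0}"

lemma commX_cy:
  assumes "(z :: 'a::field weyl) \<cdot>\<^sub>W weyl_x = weyl_x \<cdot>\<^sub>W z" "cy z m \<noteq> 0"
  shows "CHAR('a) dvd m"
proof (cases m)
  case 0
  then show ?thesis by simp
next
  case (Suc j)
  from assms(2) obtain i where "coeff (cy z m) i \<noteq> 0" by (auto simp: poly_eq_iff)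
  then have nz: "lk z (i, Suc j) \<noteq> 0" using Suc by (simp add: coeff_cy)
  have "lk (weyl_x \<cdot>\<^sub>W z - z \<cdot>\<^sub>W weyl_x) (i,j) = 0" using assms(1) by simp
  then have "of_nat (Suc j) * lk z (i, Suc j) = (0::'a)" by (simp add: lookup_commX)
  then have "(of_nat (Suc j) :: 'a) = 0" using nz by simp
  then have "CHAR('a) dvd Suc j" by (simp only: of_nat_eq_0_iff_char_dvd)
  with Suc show ?thesis by simp
qed

lemma comm_yhat_term:
  fixes g h :: "'a::field poly"
  assumes "g = 0 \<or> CHAR('a) dvd m"
  shows "yhat h \<cdot>\<^sub>W (wp g \<cdot>\<^sub>W Yp m) - (wp g \<cdot>\<^sub>W Yp m) \<cdot>\<^sub>W yhat h = wp (h * pderiv g) \<cdot>\<^sub>W Yp m"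
proof (cases "g = 0")
  case True
  then show ?thesis by simp
next
  case False
  then have dm: "CHAR('a) dvd m" using assms by simp
  have "yhat h \<cdot>\<^sub>W (wp g \<cdot>\<^sub>W Yp m) = (weyl_y \<cdot>\<^sub>W wp (h * g)) \<cdot>\<^sub>W Yp m"
    by (simp only: yhat_def wp_mult weyl_assoc)
  also have "\<dots> = wp (h * g) \<cdot>\<^sub>W Yp (Suc m) + wp (pderiv (h * g)) \<cdot>\<^sub>W Yp m"
    by (simp only: Y_wp weyl_add_mult weyl_assoc weyl_pow.simps)
  finally have l: "yhat h \<cdot>\<^sub>W (wp g \<cdot>\<^sub>W Yp m) = wp (h * g) \<cdot>\<^sub>W Yp (Suc m) + wp (pderiv (h * g)) \<cdot>\<^sub>W Yp m" .
  have "(wp g \<cdot>\<^sub>W Yp m) \<cdot>\<^sub>W yhat h = wp g \<cdot>\<^sub>W (Yp m \<cdot>\<^sub>W (weyl_y \<cdot>\<^sub>W wp h))"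
    by (simp add: yhat_def weyl_assoc)
  also have "\<dots> = wp g \<cdot>\<^sub>W ((weyl_y \<cdot>\<^sub>W wp h) \<cdot>\<^sub>W Yp m)"
    using Yp_central[OF dm] by simp
  also have "\<dots> = wp (g * h) \<cdot>\<^sub>W Yp (Suc m) + wp (g * pderiv h) \<cdot>\<^sub>W Yp m"
    by (simp add: Y_wp weyl_add_mult weyl_mult_add weyl_assoc wp_mult)
  finally have r: "(wp g \<cdot>\<^sub>W Yp m) \<cdot>\<^sub>W yhat h = wp (g * h) \<cdot>\<^sub>W Yp (Suc m) + wp (g * pderiv h) \<cdot>\<^sub>W Yp m" .
  have "pderiv (h * g) - g * pderiv h = h * pderiv g" by (simp add: pderiv_mult algebra_simps)
  then show ?thesis unfolding l r
    by (simp add: mult.commute[of g h] wp_diff[symmetric] weyl_diff_mult[symmetric])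
qed

lemma center_sub_Z1:
  fixes h :: "'a::field poly"
  assumes h: "h \<noteq> 0" and z: "z \<in> weyl_center (A_h h)"
  shows "z \<in> Z1set"
proof -
  from z have zA: "z \<in> A_h h" and zc: "\<And>a. a \<in> A_h h \<Longrightarrow> z \<cdot>\<^sub>W a = a \<cdot>\<^sub>W z"
    unfolding weyl_center_def by auto
  have dv: "CHAR('a) dvd m" if "cy z m \<noteq> 0" for m
    using commX_cy[OF zc[OF x_in_A] that] .
  let ?N = "ydeg z"
  have "0 = yhat h \<cdot>\<^sub>W z - z \<cdot>\<^sub>W yhat h" using zc[OF yhat_in_A] by simp
  also have "\<dots> = yhat h \<cdot>\<^sub>W (\<Sum>m\<le>?N. wp (cy z m) \<cdot>\<^sub>W Yp m) - (\<Sum>m\<le>?N. wp (cy z m) \<cdot>\<^sub>W Yp m) \<cdot>\<^sub>W yhat h"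
    using normal_form[of z ?N] by simp
  also have "\<dots> = (\<Sum>m\<le>?N. yhat h \<cdot>\<^sub>W (wp (cy z m) \<cdot>\<^sub>W Yp m) - (wp (cy z m) \<cdot>\<^sub>W Yp m) \<cdot>\<^sub>W yhat h)"
    by (simp add: weyl_mult_sum weyl_sum_mult sum_subtractf)
  also have "\<dots> = (\<Sum>m\<le>?N. wp (h * pderiv (cy z m)) \<cdot>\<^sub>W Yp m)"
    by (rule sum.cong[OF refl], rule comm_yhat_term) (use dv in blast)
  finally have eq: "(\<Sum>m\<le>?N. wp (h * pderiv (cy z m)) \<cdot>\<^sub>W Yp m) = 0" by simp
  have "pderiv (cy z m) = 0" for m
  proof (cases "m \<le> ?N")
    case True
    have "cy (\<Sum>m\<le>?N. wp (h * pderiv (cy z m)) \<cdot>\<^sub>W Yp m) m = h * pderiv (cy z m)"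
      using True by (simp add: cy_sum_wp_Yp)
    then show ?thesis using eq h by simp
  next
    case False
    then show ?thesis using cy_beyond[of z m] by simp
  qed
  then show ?thesis unfolding Z1set_def using dv by blast
qed



section \<open>Decomposition of polynomials over F[x^p]\<close>

definition pc :: "'a::field poly \<Rightarrow> nat \<Rightarrow> 'a poly" where
  "pc g i = (\<Sum>k\<le>degree g. monom (coeff g (CHAR('a) * k + i)) (CHAR('a) * k))"

lemma coeff_pc:
  assumes "CHAR('a::field) > 0"
  shows "coeff (pc (g :: 'a poly) i) t = (if CHAR('a) dvd t then coeff g (t + i) else 0)"
proof -
  have "coeff (pc g i) t = (\<Sum>k\<le>degree g. if CHAR('a) * k = t then coeff g (CHAR('a) * k + i) else 0)"
    unfolding pc_def coeff_sum by (simp add: coeff_monom)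
  also have "\<dots> = (if CHAR('a) dvd t then coeff g (t + i) else 0)"
  proof (cases "CHAR('a) dvd t")
    case True
    then obtain k0 where t: "t = CHAR('a) * k0" by (elim dvdE)
    have eq: "CHAR('a) * k = t \<longleftrightarrow> k = k0" for k using assms t by simp
    show ?thesis
    proof (cases "k0 \<le> degree g")
      case True
      then show ?thesis using \<open>CHAR('a) dvd t\<close> by (simp only: eq) (simp add: t)
    next
      case False
      have "k0 \<le> t" using assms t by simp
      then have "degree g < t + i" using False by simp
      then have "coeff g (t + i) = 0" by (simp add: coeff_eq_0)
      moreover have "(\<Sum>k\<le>degree g. if CHAR('a) * k = t then coeff g (CHAR('a) * k + i) else 0) = 0"
        using False by (intro sum.neutral) (auto simp: eq)
      ultimately show ?thesis by simp
    qed
  next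
    case False
    then have "CHAR('a) * k \<noteq> t" for k by auto
    then show ?thesis using False by simp
  qed
  finally show ?thesis .
qed

lemma pderiv_pc:
  assumes "CHAR('a::field) > 0"
  shows "pderiv (pc (g :: 'a poly) i) = 0"
proof -
  have "coeff (pderiv (pc g i)) n = 0" for n
  proof -
    have "coeff (pderiv (pc g i)) n = of_nat (Suc n) * coeff (pc g i) (Suc n)" by (rule coeff_pderiv)
    also have "\<dots> = 0"
    proof (cases "CHAR('a) dvd Suc n")
      case True
      then have "(of_nat (Suc n) :: 'a) = 0" by (simp only: of_nat_eq_0_iff_char_dvd)
      then show ?thesis by simp
    next
      case False
      then show ?thesis by (simp add: coeff_pc[OF assms])
    qed
    finally show ?thesis .
  qed
  then show ?thesis by (simp add: poly_eq_iff)
qed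

lemma modeq: "(i::nat) < p \<Longrightarrow> i \<le> n \<Longrightarrow> p dvd (n - i) \<Longrightarrow> i = n mod p"
  using mod_nat_eqI by presburger

lemma pc_decomp:
  assumes "CHAR('a::field) > 0"
  shows "(g :: 'a poly) = (\<Sum>i<CHAR('a). monom 1 i * pc g i)"
proof -
  let ?p = "CHAR('a)"
  have "coeff (\<Sum>i<?p. monom 1 i * pc g i) n = coeff g n" for n
  proof -
    have "coeff (\<Sum>i<?p. monom 1 i * pc g i) n = (\<Sum>i<?p. if i \<le> n \<and> ?p dvd (n - i) then coeff g n else 0)"
      unfolding coeff_sum by (rule sum.cong) (auto simp: coeff_monom_mult coeff_pc[OF assms])
    also have "\<dots> = (\<Sum>i<?p. if i = n mod ?p then coeff g n else 0)"
    proof (rule sum.cong[OF refl])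
      fix i assume "i \<in> {..<?p}"
      then have "i < ?p" by simp
      then have "(i \<le> n \<and> ?p dvd (n - i)) \<longleftrightarrow> i = n mod ?p"
        using modeq[of i ?p n] by (auto simp: minus_mod_eq_mult_div[symmetric])
      then show "(if i \<le> n \<and> ?p dvd (n - i) then coeff g n else 0) = (if i = n mod ?p then coeff g n else 0)"
        by simp
    qed
    also have "\<dots> = coeff g n" using assms by simp
    finally show ?thesis .
  qed
  then show ?thesis by (simp add: poly_eq_iff)
qed

lemma pc_unique:
  assumes "CHAR('a::field) > 0" and d: "\<And>i. i < CHAR('a) \<Longrightarrow> pderiv (c i :: 'a poly) = 0"
    and s: "(\<Sum>i<CHAR('a). monom 1 i * c i) = 0"
    and i0: "i0 < CHAR('a)"
  shows "c i0 = 0"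
proof -
  let ?p = "CHAR('a)"
  have "coeff (c i0) t = 0" for t
  proof (cases "?p dvd t")
    case False
    then show ?thesis using pderiv_zero_coeff[OF d[OF i0]] by blast
  next
    case True
    let ?n = "t + i0"
    have "0 = coeff (\<Sum>i<?p. monom 1 i * c i) ?n" using s by simp
    also have "\<dots> = (\<Sum>i<?p. if i \<le> ?n then coeff (c i) (?n - i) else 0)"
      unfolding coeff_sum by (rule sum.cong) (auto simp: coeff_monom_mult)
    also have "\<dots> = (\<Sum>i<?p. if i = i0 then coeff (c i0) t else 0)"
    proof (rule sum.cong[OF refl])
      fix i assume "i \<in> {..<?p}"
      then have ip: "i < ?p" by simp
      show "(if i \<le> ?n then coeff (c i) (?n - i) else 0) = (if i = i0 then coeff (c i0) t else 0)"
      proof (cases "i = i0")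
        case True
        then show ?thesis by simp
      next
        case False
        have "coeff (c i) (?n - i) = 0" if "i \<le> ?n"
        proof (rule ccontr)
          assume "coeff (c i) (?n - i) \<noteq> 0"
          then have "?p dvd (?n - i)" using pderiv_zero_coeff[OF d[OF ip]] by blast
          then have "i = ?n mod ?p" using modeq[OF ip that] by blast
          moreover have "i0 = ?n mod ?p" using modeq[OF i0, of ?n] True by simp
          ultimately show False using False by simp
        qed
        then show ?thesis using False by simp
      qed
    qed
    also have "\<dots> = coeff (c i0) t" using i0 by simp
    finally show ?thesis by simp
  qed
  then show ?thesis by (simp add: poly_eq_iff)
qed



definition Zc :: "'a::field poly \<Rightarrow> 'a weyl set" where
  "Zc h = {z. z \<in> A_h h \<and> (\<forall>a. z \<cdot>\<^sub>W a = a \<cdot>\<^sub>W z)}"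

lemma Zc_center: "z \<in> Zc h \<Longrightarrow> z \<in> weyl_center (A_h h)"
  unfolding Zc_def weyl_center_def by auto

lemma Zc_add: "a \<in> Zc h \<Longrightarrow> b \<in> Zc h \<Longrightarrow> a + b \<in> Zc h"
proof -
  assume a: "a \<in> Zc h" and b: "b \<in> Zc h"
  have "(a + b) \<cdot>\<^sub>W c = c \<cdot>\<^sub>W (a + b)" for c
  proof -
    have "a \<cdot>\<^sub>W c = c \<cdot>\<^sub>W a" "b \<cdot>\<^sub>W c = c \<cdot>\<^sub>W b" using a b unfolding Zc_def by blast+
    then show ?thesis by (simp only: weyl_add_mult weyl_mult_add)
  qed
  moreover have "a + b \<in> A_h h" using a b unfolding Zc_def by (blast intro: A_add)
  ultimately show ?thesis unfolding Zc_def by blast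
qed

lemma Zc_zero: "0 \<in> Zc h"
  unfolding Zc_def using A_zero by simp

lemma Zc_sum: "(\<And>i. i \<in> I \<Longrightarrow> f i \<in> Zc h) \<Longrightarrow> (\<Sum>i\<in>I. f i) \<in> Zc h"
  by (induction I rule: infinite_finite_induct) (auto intro: Zc_zero Zc_add)

lemma Zc_mult: "a \<in> Zc h \<Longrightarrow> b \<in> Zc h \<Longrightarrow> a \<cdot>\<^sub>W b \<in> Zc h"
proof -
  assume a: "a \<in> Zc h" and b: "b \<in> Zc h"
  have "(a \<cdot>\<^sub>W b) \<cdot>\<^sub>W c = c \<cdot>\<^sub>W (a \<cdot>\<^sub>W b)" for c
  proof -
    have ac: "a \<cdot>\<^sub>W d = d \<cdot>\<^sub>W a" for d using a unfolding Zc_def by blast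
    have bc: "b \<cdot>\<^sub>W d = d \<cdot>\<^sub>W b" for d using b unfolding Zc_def by blast
    have "(a \<cdot>\<^sub>W b) \<cdot>\<^sub>W c = a \<cdot>\<^sub>W (c \<cdot>\<^sub>W b)" by (simp only: weyl_assoc bc)
    also have "\<dots> = (c \<cdot>\<^sub>W a) \<cdot>\<^sub>W b" by (simp only: weyl_assoc[symmetric] ac)
    finally show ?thesis by (simp only: weyl_assoc)
  qed
  moreover have "a \<cdot>\<^sub>W b \<in> A_h h" using a b unfolding Zc_def by (blast intro: A_mult)
  ultimately show ?thesis unfolding Zc_def by blast
qed

lemma Zc_smult: "a \<in> Zc h \<Longrightarrow> weyl_smult c a \<in> Zc h"
proof -
  assume a: "a \<in> Zc h"
  have "weyl_smult c a \<cdot>\<^sub>W d = d \<cdot>\<^sub>W weyl_smult c a" for d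
  proof -
    have "a \<cdot>\<^sub>W d = d \<cdot>\<^sub>W a" using a unfolding Zc_def by blast
    then show ?thesis by (simp only: weyl_smult_mult weyl_mult_smult)
  qed
  moreover have "weyl_smult c a \<in> A_h h" using a unfolding Zc_def by (blast intro: A_smult)
  ultimately show ?thesis unfolding Zc_def by blast
qed

definition ee :: "'a::field poly \<Rightarrow> nat \<Rightarrow> nat \<Rightarrow> 'a weyl" where
  "ee h i j = Xp i \<cdot>\<^sub>W wp (h ^ j) \<cdot>\<^sub>W Yp j"

lemma ee_wp: "ee h i j = wp (monom 1 i * h ^ j) \<cdot>\<^sub>W Yp j"
  by (simp add: ee_def Xp_wp wp_mult)

lemma decomp_term:
  fixes h c :: "'a::field poly" and m i :: nat
  assumes "CHAR('a) > 0" "pderiv c = 0"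
  defines "P \<equiv> CHAR('a) * (m div CHAR('a))"
  shows "wp (monom 1 i * c * h ^ m) \<cdot>\<^sub>W Yp m = (wp (c * h ^ P) \<cdot>\<^sub>W Yp P) \<cdot>\<^sub>W ee h i (m mod CHAR('a))"
proof -
  let ?j = "m mod CHAR('a)"
  have m: "m = P + ?j" unfolding P_def by simp
  have dP: "CHAR('a) dvd P" unfolding P_def by simp
  have "(wp (c * h ^ P) \<cdot>\<^sub>W Yp P) \<cdot>\<^sub>W ee h i ?j = wp (c * h ^ P) \<cdot>\<^sub>W (Yp P \<cdot>\<^sub>W wp (monom 1 i * h ^ ?j)) \<cdot>\<^sub>W Yp ?j"
    by (simp add: ee_wp weyl_assoc)
  also have "\<dots> = wp (c * h ^ P) \<cdot>\<^sub>W (wp (monom 1 i * h ^ ?j) \<cdot>\<^sub>W Yp P) \<cdot>\<^sub>W Yp ?j"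
    using Yp_central[OF dP] by simp
  also have "\<dots> = wp (c * h ^ P * (monom 1 i * h ^ ?j)) \<cdot>\<^sub>W Yp (P + ?j)"
    by (simp only: wp_mult weyl_assoc Yp_add)
  also have "c * h ^ P * (monom 1 i * h ^ ?j) = monom 1 i * c * h ^ m"
    by (subst m) (simp add: power_add algebra_simps)
  finally show ?thesis using m by simp
qed

lemma decomp_term_Zc:
  fixes h c :: "'a::field poly" and m :: nat
  assumes "CHAR('a) > 0" "pderiv c = 0"
  defines "P \<equiv> CHAR('a) * (m div CHAR('a))"
  shows "wp (c * h ^ P) \<cdot>\<^sub>W Yp P \<in> Zc h"
proof -
  have dP: "CHAR('a) dvd P" unfolding P_def by simp
  have inA: "wp (c * h ^ P) \<cdot>\<^sub>W Yp P \<in> A_h h"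
    by (simp add: wp_mult weyl_assoc A_mult wp_in_A hy_in_A)
  have pd: "pderiv (c * h ^ P) = 0"
    using assms(2) pderiv_pow_char[OF dP] by (simp add: pderiv_mult)
  have "(wp (c * h ^ P) \<cdot>\<^sub>W Yp P) \<cdot>\<^sub>W a = a \<cdot>\<^sub>W (wp (c * h ^ P) \<cdot>\<^sub>W Yp P)" for a
  proof -
    have "(wp (c * h ^ P) \<cdot>\<^sub>W Yp P) \<cdot>\<^sub>W a = wp (c * h ^ P) \<cdot>\<^sub>W (a \<cdot>\<^sub>W Yp P)"
      using Yp_central[OF dP, of a] by (simp add: weyl_assoc)
    also have "\<dots> = a \<cdot>\<^sub>W (wp (c * h ^ P) \<cdot>\<^sub>W Yp P)"
      using wp_central[OF pd, of a] by (simp add: weyl_assoc[symmetric])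
    finally show ?thesis .
  qed
  then show ?thesis using inA unfolding Zc_def by blast
qed

lemma decompA:
  fixes h :: "'a::field poly"
  assumes p: "CHAR('a) > 0" and a: "a \<in> A_h h"
  shows "\<exists>zz. (\<forall>ij. zz ij \<in> Zc h) \<and> a = (\<Sum>ij\<in>{..<CHAR('a)} \<times> {..<CHAR('a)}. zz ij \<cdot>\<^sub>W ee h (fst ij) (snd ij))"
proof -
  let ?p = "CHAR('a)"
  let ?N = "ydeg a"
  define g where "g m = cy a m div h ^ m" for m
  have aB: "a \<in> Bset h" using a A_sub_B by blast
  have cyg: "cy a m = g m * h ^ m" for m
    using aB unfolding Bset_def g_def by (simp add: dvd_div_mult_self)
  define zt where "zt m i = wp (pc (g m) i * h ^ (?p * (m div ?p))) \<cdot>\<^sub>W Yp (?p * (m div ?p))" for m i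
  have ztZ: "zt m i \<in> Zc h" for m i
    unfolding zt_def by (rule decomp_term_Zc[OF p pderiv_pc[OF p]])
  have tm: "wp (cy a m) \<cdot>\<^sub>W Yp m = (\<Sum>i<?p. zt m i \<cdot>\<^sub>W ee h i (m mod ?p))" for m
  proof -
    have "wp (cy a m) \<cdot>\<^sub>W Yp m = wp ((\<Sum>i<?p. monom 1 i * pc (g m) i) * h ^ m) \<cdot>\<^sub>W Yp m"
      using pc_decomp[OF p, of "g m"] cyg by simp
    also have "\<dots> = (\<Sum>i<?p. wp (monom 1 i * pc (g m) i * h ^ m) \<cdot>\<^sub>W Yp m)"
      by (simp add: sum_distrib_right wp_sum weyl_sum_mult)
    also have "\<dots> = (\<Sum>i<?p. zt m i \<cdot>\<^sub>W ee h i (m mod ?p))"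
      unfolding zt_def by (rule sum.cong[OF refl], rule decomp_term[OF p pderiv_pc[OF p]])
    finally show ?thesis .
  qed
  define zz where "zz ij = (\<Sum>m\<in>{m. m \<in> {..?N} \<and> m mod ?p = snd ij}. zt m (fst ij))" for ij
  have zzZ: "zz ij \<in> Zc h" for ij unfolding zz_def by (rule Zc_sum, rule ztZ)
  have "a = (\<Sum>m\<le>?N. wp (cy a m) \<cdot>\<^sub>W Yp m)" by (rule normal_form) simp
  also have "\<dots> = (\<Sum>m\<le>?N. \<Sum>i<?p. zt m i \<cdot>\<^sub>W ee h i (m mod ?p))" by (simp add: tm)
  also have "\<dots> = (\<Sum>i<?p. \<Sum>m\<le>?N. zt m i \<cdot>\<^sub>W ee h i (m mod ?p))" by (rule sum.swap)
  also have "\<dots> = (\<Sum>i<?p. \<Sum>j<?p. zz (i,j) \<cdot>\<^sub>W ee h i j)"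
  proof (rule sum.cong[OF refl])
    fix i
    have "(\<Sum>m\<le>?N. zt m i \<cdot>\<^sub>W ee h i (m mod ?p)) = (\<Sum>j<?p. \<Sum>m\<in>{m. m \<in> {..?N} \<and> m mod ?p = j}. zt m i \<cdot>\<^sub>W ee h i (m mod ?p))"
      by (rule sum.group[symmetric]) (use p in auto)
    also have "\<dots> = (\<Sum>j<?p. zz (i,j) \<cdot>\<^sub>W ee h i j)"
      unfolding zz_def weyl_sum_mult by (rule sum.cong[OF refl], rule sum.cong) auto
    finally show "(\<Sum>m\<le>?N. zt m i \<cdot>\<^sub>W ee h i (m mod ?p)) = (\<Sum>j<?p. zz (i,j) \<cdot>\<^sub>W ee h i j)" .
  qed
  also have "\<dots> = (\<Sum>ij\<in>{..<?p} \<times> {..<?p}. zz ij \<cdot>\<^sub>W ee h (fst ij) (snd ij))"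
    by (simp add: sum.cartesian_product case_prod_beta)
  finally show ?thesis using zzZ by blast
qed



lemma Z1_term_mult:
  fixes q :: "'a::field poly"
  assumes z: "z \<in> Z1set"
  shows "(wp (cy z m) \<cdot>\<^sub>W Yp m) \<cdot>\<^sub>W (wp q \<cdot>\<^sub>W Yp j) = wp (cy z m * q) \<cdot>\<^sub>W Yp (m + j)"
proof (cases "cy z m = 0")
  case True
  then show ?thesis by simp
next
  case False
  then have d: "CHAR('a) dvd m" using z unfolding Z1set_def by blast
  have "(wp (cy z m) \<cdot>\<^sub>W Yp m) \<cdot>\<^sub>W (wp q \<cdot>\<^sub>W Yp j) = wp (cy z m) \<cdot>\<^sub>W (Yp m \<cdot>\<^sub>W wp q) \<cdot>\<^sub>W Yp j"
    by (simp only: weyl_assoc)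
  also have "\<dots> = wp (cy z m) \<cdot>\<^sub>W (wp q \<cdot>\<^sub>W Yp m) \<cdot>\<^sub>W Yp j"
    using Yp_central[OF d, of "wp q"] by simp
  also have "\<dots> = wp (cy z m * q) \<cdot>\<^sub>W Yp (m + j)"
    by (simp only: weyl_assoc wp_mult Yp_add)
  finally show ?thesis .
qed

lemma sum_delta_minus:
  fixes F :: "nat \<Rightarrow> 'b::comm_monoid_add"
  shows "(\<Sum>m\<le>N. if s = m + j then F m else 0) = (if j \<le> s \<and> s - j \<le> N then F (s - j) else 0)"
proof -
  have "(\<Sum>m\<le>N. if s = m + j then F m else 0) = (\<Sum>m\<le>N. if m = s - j \<and> j \<le> s then F m else 0)"
    by (rule sum.cong) auto
  also have "\<dots> = (if j \<le> s \<and> s - j \<le> N then F (s - j) else 0)"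
    by (cases "j \<le> s") (simp_all add: sum.delta)
  finally show ?thesis .
qed

lemma Z1_mult_cy:
  fixes q :: "'a::field poly"
  assumes z: "z \<in> Z1set"
  shows "cy (z \<cdot>\<^sub>W (wp q \<cdot>\<^sub>W Yp j)) s = (if j \<le> s then cy z (s - j) * q else 0)"
proof -
  let ?N = "ydeg z"
  have "z \<cdot>\<^sub>W (wp q \<cdot>\<^sub>W Yp j) = (\<Sum>m\<le>?N. wp (cy z m) \<cdot>\<^sub>W Yp m) \<cdot>\<^sub>W (wp q \<cdot>\<^sub>W Yp j)"
    using normal_form[of z ?N] by simp
  also have "\<dots> = (\<Sum>m\<le>?N. wp (cy z m * q) \<cdot>\<^sub>W Yp (m + j))"
    by (simp add: weyl_sum_mult Z1_term_mult[OF z])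
  finally have eq: "z \<cdot>\<^sub>W (wp q \<cdot>\<^sub>W Yp j) = (\<Sum>m\<le>?N. wp (cy z m * q) \<cdot>\<^sub>W Yp (m + j))" .
  have "cy (z \<cdot>\<^sub>W (wp q \<cdot>\<^sub>W Yp j)) s = (\<Sum>m\<le>?N. if s = m + j then cy z m * q else 0)"
    unfolding eq cy_sum cy_wp_Yp ..
  also have "\<dots> = (if j \<le> s \<and> s - j \<le> ?N then cy z (s - j) * q else 0)"
    by (rule sum_delta_minus)
  also have "\<dots> = (if j \<le> s then cy z (s - j) * q else 0)"
    using cy_beyond[of z "s - j"] by auto
  finally show ?thesis .
qed

lemma Z1_pderiv: "z \<in> Z1set \<Longrightarrow> pderiv (cy z m) = 0"
  unfolding Z1set_def by (cases "cy z m = 0") auto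

lemma Z1_dvd: "z \<in> (Z1set :: 'a::field weyl set) \<Longrightarrow> cy z m \<noteq> 0 \<Longrightarrow> CHAR('a) dvd m"
  unfolding Z1set_def by auto

definition qq :: "'a::field poly \<Rightarrow> nat \<times> nat \<Rightarrow> 'a poly" where
  "qq h ij = h * monom 1 (fst ij) * h ^ (snd ij)"

lemma direct_J:
  fixes h :: "'a::field poly"
  assumes p: "CHAR('a) > 0" and h: "h \<noteq> 0"
    and zz: "\<And>ij. ij \<in> {..<CHAR('a)} \<times> {..<CHAR('a)} \<Longrightarrow> zz ij \<in> Z1set"
    and s0: "(\<Sum>ij\<in>{..<CHAR('a)} \<times> {..<CHAR('a)}. zz ij \<cdot>\<^sub>W (wp (qq h ij) \<cdot>\<^sub>W Yp (snd ij))) = 0"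
    and ij: "ij \<in> {..<CHAR('a)} \<times> {..<CHAR('a)}"
  shows "zz ij \<cdot>\<^sub>W (wp (qq h ij) \<cdot>\<^sub>W Yp (snd ij)) = 0"
proof -
  let ?p = "CHAR('a)"
  let ?J = "{..<?p} \<times> {..<?p}"
  have step1: "cy (zz (i, s mod ?p)) (s - s mod ?p) = 0" if ip: "i < ?p" for s i
  proof -
    let ?r = "s mod ?p"
    have rp: "?r < ?p" using p by simp
    have rs: "?r \<le> s" by simp
    define c where "c i = cy (zz (i, ?r)) (s - ?r)" for i
    have "0 = cy (\<Sum>ij\<in>?J. zz ij \<cdot>\<^sub>W (wp (qq h ij) \<cdot>\<^sub>W Yp (snd ij))) s" using s0 by simp
    also have "\<dots> = (\<Sum>ij\<in>?J. if snd ij \<le> s then cy (zz ij) (s - snd ij) * qq h ij else 0)"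
      unfolding cy_sum by (rule sum.cong[OF refl]) (simp add: Z1_mult_cy zz)
    also have "\<dots> = (\<Sum>ij\<in>?J. if snd ij = ?r then cy (zz ij) (s - ?r) * qq h ij else 0)"
    proof (rule sum.cong[OF refl])
      fix ij assume ijJ: "ij \<in> ?J"
      show "(if snd ij \<le> s then cy (zz ij) (s - snd ij) * qq h ij else 0) = (if snd ij = ?r then cy (zz ij) (s - ?r) * qq h ij else 0)"
      proof (cases "snd ij = ?r")
        case True
        then show ?thesis by simp
      next
        case False
        have "cy (zz ij) (s - snd ij) = 0" if "snd ij \<le> s"
        proof (rule ccontr)
          assume "cy (zz ij) (s - snd ij) \<noteq> 0"
          then have "?p dvd (s - snd ij)" using Z1_dvd zz[OF ijJ] by blast
          then have "snd ij = ?r" using modeq[of "snd ij" ?p s] ijJ that by auto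
          then show False using False by simp
        qed
        then show ?thesis using False by auto
      qed
    qed
    also have "\<dots> = (\<Sum>i<?p. \<Sum>j<?p. if j = ?r then c i * (h * monom 1 i * h ^ ?r) else 0)"
      by (simp add: sum.cartesian_product' qq_def c_def)
    also have "\<dots> = (\<Sum>i<?p. c i * (h * monom 1 i * h ^ ?r))"
      using rp by (simp add: sum.delta)
    also have "\<dots> = (\<Sum>i<?p. monom 1 i * c i) * h ^ Suc ?r"
      by (simp add: sum_distrib_left sum_distrib_right mult_ac)
    finally have "(\<Sum>i<?p. monom 1 i * c i) * h ^ Suc ?r = 0" by simp
    then have sz: "(\<Sum>i<?p. monom 1 i * c i) = 0" using h by simp
    have d: "pderiv (c i') = 0" if "i' < ?p" for i'
    proof -
      have "(i', ?r) \<in> ?J" using that rp by simp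
      then show ?thesis unfolding c_def by (rule Z1_pderiv[OF zz])
    qed
    have "c i = 0" by (rule pc_unique[OF p d sz ip])
    then show ?thesis by (simp add: c_def)
  qed
  obtain i j where ijeq: "ij = (i,j)" by force
  have "cy (zz ij \<cdot>\<^sub>W (wp (qq h ij) \<cdot>\<^sub>W Yp (snd ij))) s = 0" for s
  proof -
    have "cy (zz ij) (s - j) = 0" if js: "j \<le> s"
    proof (rule ccontr)
      assume nz: "cy (zz ij) (s - j) \<noteq> 0"
      then have "?p dvd (s - j)" using Z1_dvd zz[OF ij] by blast
      then have jr: "j = s mod ?p" using modeq[of j ?p s] ij ijeq js by auto
      have "i < ?p" using ij ijeq by auto
      from step1[OF this, of s] nz show False using jr ijeq by simp
    qed
    moreover have "cy (zz ij \<cdot>\<^sub>W (wp (qq h ij) \<cdot>\<^sub>W Yp (snd ij))) s = (if j \<le> s then cy (zz ij) (s - j) * qq h ij else 0)"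
      using Z1_mult_cy[OF zz[OF ij], of "qq h ij" "snd ij" s] ijeq by simp
    ultimately show ?thesis by simp
  qed
  then show ?thesis by (rule cy_eq_0_imp)
qed



lemma weyl_comm_add: "weyl_comm u (a + b) = weyl_comm u a + weyl_comm u b"
  by (simp add: weyl_comm_def weyl_mult_add weyl_add_mult)

lemma weyl_comm_zero[simp]: "weyl_comm u 0 = 0"
  by (simp add: weyl_comm_def)

lemma weyl_comm_sum: "weyl_comm u (\<Sum>i\<in>S. f i) = (\<Sum>i\<in>S. weyl_comm u (f i))"
  by (induction S rule: infinite_finite_induct) (auto simp: weyl_comm_add)

lemma weyl_comm_smult: "weyl_comm u (weyl_smult c a) = weyl_smult c (weyl_comm u a)"
  by (simp add: weyl_comm_def weyl_mult_smult weyl_smult_mult wsmult_diff)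

lemma weyl_comm_central:
  assumes "z \<cdot>\<^sub>W u = u \<cdot>\<^sub>W z"
  shows "weyl_comm u (z \<cdot>\<^sub>W b) = z \<cdot>\<^sub>W weyl_comm u b"
proof -
  have "u \<cdot>\<^sub>W (z \<cdot>\<^sub>W b) = z \<cdot>\<^sub>W (u \<cdot>\<^sub>W b)"
    by (simp only: weyl_assoc[symmetric] assms)
  then show ?thesis by (simp add: weyl_comm_def weyl_mult_diff weyl_assoc)
qed

lemma center_comm: "z \<in> weyl_center A \<Longrightarrow> b \<in> A \<Longrightarrow> z \<cdot>\<^sub>W b = b \<cdot>\<^sub>W z"
  unfolding weyl_center_def by blast

lemma comm_X_wpY: "weyl_comm weyl_x (wp g \<cdot>\<^sub>W Yp n) = weyl_smult (- of_nat n) (wp g \<cdot>\<^sub>W Yp (n - 1))"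
proof -
  have l: "weyl_x \<cdot>\<^sub>W (wp g \<cdot>\<^sub>W Yp n) = wp ([:0,1:] * g) \<cdot>\<^sub>W Yp n"
    by (simp only: wp_mult wp_x weyl_assoc)
  have "(wp g \<cdot>\<^sub>W Yp n) \<cdot>\<^sub>W weyl_x = wp g \<cdot>\<^sub>W (weyl_x \<cdot>\<^sub>W Yp n + weyl_smult (of_nat n) (Yp (n - 1)))"
    by (simp only: weyl_assoc Yp_X)
  also have "\<dots> = wp (g * [:0,1:]) \<cdot>\<^sub>W Yp n + weyl_smult (of_nat n) (wp g \<cdot>\<^sub>W Yp (n - 1))"
    by (simp only: weyl_mult_add weyl_mult_smult wp_mult wp_x weyl_assoc)
  finally have r: "(wp g \<cdot>\<^sub>W Yp n) \<cdot>\<^sub>W weyl_x = wp ([:0,1:] * g) \<cdot>\<^sub>W Yp n + weyl_smult (of_nat n) (wp g \<cdot>\<^sub>W Yp (n - 1))"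
    by (simp only: mult.commute)
  show ?thesis unfolding weyl_comm_def l r
    by (rule weyl_eqI) (simp add: lookup_add lookup_minus)
qed

lemma sum_delta_minus2:
  fixes F :: "nat \<Rightarrow> 'b::comm_monoid_add"
  shows "(\<Sum>l\<le>n. if s = n - l then F l else 0) = (if s \<le> n then F (n - s) else 0)"
proof -
  have "(\<Sum>l\<le>n. if s = n - l then F l else 0) = (\<Sum>l\<le>n. if l = n - s \<and> s \<le> n then F l else 0)"
    by (rule sum.cong) auto
  also have "\<dots> = (if s \<le> n then F (n - s) else 0)"
    by (cases "s \<le> n") (simp_all add: sum.delta)
  finally show ?thesis .
qed

lemma yhat_left: "yhat h \<cdot>\<^sub>W (wp g \<cdot>\<^sub>W Yp j) = wp (h * g) \<cdot>\<^sub>W Yp (Suc j) + wp (pderiv (h * g)) \<cdot>\<^sub>W Yp j"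
proof -
  have "yhat h \<cdot>\<^sub>W (wp g \<cdot>\<^sub>W Yp j) = (weyl_y \<cdot>\<^sub>W wp (h * g)) \<cdot>\<^sub>W Yp j"
    by (simp only: yhat_def wp_mult weyl_assoc)
  also have "\<dots> = wp (h * g) \<cdot>\<^sub>W Yp (Suc j) + wp (pderiv (h * g)) \<cdot>\<^sub>W Yp j"
    by (simp only: Y_wp weyl_add_mult weyl_assoc weyl_pow.simps)
  finally show ?thesis .
qed

lemma yhat_right: "(wp g \<cdot>\<^sub>W Yp j) \<cdot>\<^sub>W yhat h
   = (\<Sum>l\<le>Suc j. wp (g * smult (of_nat (Suc j choose l)) ((pderiv ^^ l) h)) \<cdot>\<^sub>W Yp (Suc j - l))"
proof -
  have "(wp g \<cdot>\<^sub>W Yp j) \<cdot>\<^sub>W yhat h = wp g \<cdot>\<^sub>W (Yp (Suc j) \<cdot>\<^sub>W wp h)"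
    by (simp only: yhat_def weyl_assoc[symmetric]) (simp only: weyl_assoc weyl_pow_Suc_right)
  also have "\<dots> = (\<Sum>l\<le>Suc j. wp (g * smult (of_nat (Suc j choose l)) ((pderiv ^^ l) h)) \<cdot>\<^sub>W Yp (Suc j - l))"
    by (simp only: leibniz weyl_mult_sum weyl_assoc[symmetric] wp_mult)
  finally show ?thesis .
qed

lemma cy_comm_yhat:
  "cy (weyl_comm (yhat h) (wp g \<cdot>\<^sub>W Yp j)) s =
     (if s = Suc j then h * g else 0) + (if s = j then pderiv (h * g) else 0)
     - (if s \<le> Suc j then g * smult (of_nat (Suc j choose (Suc j - s))) ((pderiv ^^ (Suc j - s)) h) else 0)"
proof -
  have "cy (weyl_comm (yhat h) (wp g \<cdot>\<^sub>W Yp j)) s =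
     (if s = Suc j then h * g else 0) + (if s = j then pderiv (h * g) else 0)
     - (\<Sum>l\<le>Suc j. if s = Suc j - l then g * smult (of_nat (Suc j choose l)) ((pderiv ^^ l) h) else 0)"
    unfolding weyl_comm_def yhat_left yhat_right cy_diff cy_add cy_sum cy_wp_Yp ..
  also have "(\<Sum>l\<le>Suc j. if s = Suc j - l then g * smult (of_nat (Suc j choose l)) ((pderiv ^^ l) h) else 0)
     = (if s \<le> Suc j then g * smult (of_nat (Suc j choose (Suc j - s))) ((pderiv ^^ (Suc j - s)) h) else 0)"
    by (rule sum_delta_minus2)
  finally show ?thesis .
qed



lemma XA_crit:
  fixes h :: "'a::field poly"
  assumes dv: "\<And>s. h ^ Suc s dvd cy c s"
    and nz: "\<And>s. cy c s \<noteq> 0 \<Longrightarrow> \<not> CHAR('a) dvd Suc s"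
  shows "c \<in> comm_set weyl_x (A_h h)"
proof -
  let ?N = "ydeg c"
  define b where "b = (\<Sum>s\<le>?N. weyl_smult (- inverse (of_nat (Suc s))) (wp (cy c s) \<cdot>\<^sub>W Yp (Suc s)))"
  have "b \<in> Bset h" unfolding b_def
    by (intro B_sum B_smult B_term dv)
  then have bA: "b \<in> A_h h" using A_eq_B by blast
  have "weyl_comm weyl_x b = (\<Sum>s\<le>?N. weyl_smult (- inverse (of_nat (Suc s))) (weyl_smult (- of_nat (Suc s)) (wp (cy c s) \<cdot>\<^sub>W Yp s)))"
    unfolding b_def weyl_comm_sum weyl_comm_smult comm_X_wpY by simp
  also have "\<dots> = (\<Sum>s\<le>?N. wp (cy c s) \<cdot>\<^sub>W Yp s)"
  proof (rule sum.cong[OF refl])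
    fix s
    show "weyl_smult (- inverse (of_nat (Suc s))) (weyl_smult (- of_nat (Suc s)) (wp (cy c s) \<cdot>\<^sub>W Yp s)) = wp (cy c s) \<cdot>\<^sub>W Yp s"
    proof (cases "cy c s = 0")
      case True
      then show ?thesis by simp
    next
      case False
      then have "(of_nat (Suc s) :: 'a) \<noteq> 0" using nz by (simp only: of_nat_eq_0_iff_char_dvd) simp
      then have "(- inverse (of_nat (Suc s))) * (- of_nat (Suc s)) = (1::'a)"
        by (subst minus_mult_minus, rule left_inverse)
      then show ?thesis by (simp only: wsmult_smult wsmult_one)
    qed
  qed
  also have "\<dots> = c" by (rule normal_form[symmetric]) simp
  finally show ?thesis unfolding comm_set_def using bA by blast
qed

lemma part_a1_one:
  fixes h f :: "'a::field poly"
  assumes p: "CHAR('a) > 0" and j: "j + 2 \<le> CHAR('a)"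
  shows "weyl_comm (yhat h) (wp f \<cdot>\<^sub>W wp (h ^ j) \<cdot>\<^sub>W Yp j) \<in> comm_set weyl_x (A_h h)"
proof -
  let ?g = "f * h ^ j"
  let ?c = "weyl_comm (yhat h) (wp ?g \<cdot>\<^sub>W Yp j)"
  have eq: "wp f \<cdot>\<^sub>W wp (h ^ j) \<cdot>\<^sub>W Yp j = wp ?g \<cdot>\<^sub>W Yp j" by (simp add: wp_mult)
  have cyc: "cy ?c s =
     (if s = Suc j then h * ?g else 0) + (if s = j then pderiv (h * ?g) else 0)
     - (if s \<le> Suc j then ?g * smult (of_nat (Suc j choose (Suc j - s))) ((pderiv ^^ (Suc j - s)) h) else 0)" for s
    by (rule cy_comm_yhat)
  have key: "pderiv (h * ?g) - ?g * smult (of_nat (Suc j)) (pderiv h) = h ^ Suc j * pderiv f"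
  proof -
    have "pderiv (h * ?g) = pderiv (f * h ^ Suc j)" by (simp add: algebra_simps)
    also have "\<dots> = f * (smult (of_nat (Suc j)) (h ^ j * pderiv h)) + h ^ Suc j * pderiv f"
      by (simp only: pderiv_mult pderiv_power_Suc) (simp add: algebra_simps)
    finally show ?thesis by (simp add: algebra_simps)
  qed
  have cases_s: "h ^ Suc s dvd cy ?c s \<and> (cy ?c s \<noteq> 0 \<longrightarrow> s \<le> j)" for s
  proof -
    consider "s = Suc j" | "s = j" | "s < j" | "s > Suc j" by linarith
    then show ?thesis
    proof cases
      case 1
      then show ?thesis using cyc[of s] by (simp add: algebra_simps)
    next
      case 2
      then have "cy ?c s = h ^ Suc j * pderiv f" using cyc[of s] key by simp
      then show ?thesis using 2 by simp
    next
      case 3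
      then have c3: "cy ?c s = - (?g * smult (of_nat (Suc j choose (Suc j - s))) ((pderiv ^^ (Suc j - s)) h))"
        using cyc[of s] by simp
      have "h ^ Suc s dvd h ^ j" using 3 by (intro le_imp_power_dvd) simp
      then have "h ^ Suc s dvd ?g" by (rule dvd_mult)
      then have "h ^ Suc s dvd ?g * smult (of_nat (Suc j choose (Suc j - s))) ((pderiv ^^ (Suc j - s)) h)"
        by (rule dvd_mult2)
      then have "h ^ Suc s dvd cy ?c s" unfolding c3 by simp
      then show ?thesis using 3 by simp
    next
      case 4
      then show ?thesis using cyc[of s] by simp
    qed
  qed
  have "?c \<in> comm_set weyl_x (A_h h)"
  proof (rule XA_crit)
    show "h ^ Suc s dvd cy ?c s" for s using cases_s by blast
    show "\<not> CHAR('a) dvd Suc s" if "cy ?c s \<noteq> 0" for s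
    proof
      assume "CHAR('a) dvd Suc s"
      then have "CHAR('a) \<le> Suc s" by (rule dvd_imp_le) simp
      moreover have "s \<le> j" using cases_s that by blast
      ultimately show False using j by simp
    qed
  qed
  then show ?thesis unfolding eq .
qed

lemma part_a2_one:
  fixes h f :: "'a::field poly"
  assumes p: "CHAR('a) > 0"
  defines "q \<equiv> CHAR('a) - 1"
  shows "weyl_comm (yhat h) (wp f \<cdot>\<^sub>W wp (h ^ q) \<cdot>\<^sub>W Yp q) = wp (h * pderiv f * h ^ q) \<cdot>\<^sub>W Yp q"
proof -
  let ?p = "CHAR('a)"
  let ?g = "f * h ^ q"
  have pq: "Suc q = ?p" using p unfolding q_def by simp
  have eq: "wp f \<cdot>\<^sub>W wp (h ^ q) \<cdot>\<^sub>W Yp q = wp ?g \<cdot>\<^sub>W Yp q" by (simp add: wp_mult)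
  have l: "yhat h \<cdot>\<^sub>W (wp ?g \<cdot>\<^sub>W Yp q) = wp (h * ?g) \<cdot>\<^sub>W Yp ?p + wp (pderiv (h * ?g)) \<cdot>\<^sub>W Yp q"
    using yhat_left[of h ?g q] pq by simp
  have "(wp ?g \<cdot>\<^sub>W Yp q) \<cdot>\<^sub>W yhat h = wp ?g \<cdot>\<^sub>W (Yp ?p \<cdot>\<^sub>W wp h)"
    unfolding yhat_def pq[symmetric]
    by (simp only: weyl_assoc[symmetric]) (simp only: weyl_assoc weyl_pow_Suc_right)
  also have "\<dots> = wp ?g \<cdot>\<^sub>W (wp h \<cdot>\<^sub>W Yp ?p)"
    using Yp_central[of ?p "wp h"] by simp
  also have "\<dots> = wp (?g * h) \<cdot>\<^sub>W Yp ?p"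
    by (simp only: weyl_assoc wp_mult)
  also have "?g * h = h * ?g" by (rule mult.commute)
  finally have r: "(wp ?g \<cdot>\<^sub>W Yp q) \<cdot>\<^sub>W yhat h = wp (h * ?g) \<cdot>\<^sub>W Yp ?p" .
  have hp: "h * ?g = f * h ^ ?p" using pq[symmetric] by (simp add: algebra_simps)
  have "pderiv (h * ?g) = h * pderiv f * h ^ q"
    unfolding hp pderiv_mult pderiv_pow_char[OF dvd_refl] using pq[symmetric] by (simp add: algebra_simps)
  then show ?thesis unfolding eq weyl_comm_def l r by simp
qed



definition ww :: "'a::field poly \<Rightarrow> nat \<times> nat \<Rightarrow> 'a weyl" where
  "ww h = (\<lambda>(i,j). wp h \<cdot>\<^sub>W Xp i \<cdot>\<^sub>W wp (h ^ j) \<cdot>\<^sub>W Yp j)"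

lemma ww_ee: "ww h (i,j) = wp h \<cdot>\<^sub>W ee h i j"
  by (simp add: ww_def ee_def weyl_assoc)

lemma ww_qq: "ww h ij = wp (qq h ij) \<cdot>\<^sub>W Yp (snd ij)"
  by (simp add: ww_def qq_def Xp_wp wp_mult case_prod_beta)

lemma ww_shift: "wp (monom 1 i * h ^ Suc j) \<cdot>\<^sub>W Yp j = ww h (i,j)"
  by (simp add: ww_qq qq_def algebra_simps)

lemma Z_A: "z \<in> weyl_center A \<Longrightarrow> z \<in> A"
  unfolding weyl_center_def by blast

lemma Z_add: "a \<in> weyl_center (A_h h) \<Longrightarrow> b \<in> weyl_center (A_h h) \<Longrightarrow> a + b \<in> weyl_center (A_h h)"
proof -
  assume a: "a \<in> weyl_center (A_h h)" and b: "b \<in> weyl_center (A_h h)"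
  have "(a + b) \<cdot>\<^sub>W c = c \<cdot>\<^sub>W (a + b)" if "c \<in> A_h h" for c
  proof -
    have "a \<cdot>\<^sub>W c = c \<cdot>\<^sub>W a" "b \<cdot>\<^sub>W c = c \<cdot>\<^sub>W b" using a b that unfolding weyl_center_def by blast+
    then show ?thesis by (simp only: weyl_add_mult weyl_mult_add)
  qed
  moreover have "a + b \<in> A_h h" using a b unfolding weyl_center_def by (blast intro: A_add)
  ultimately show ?thesis unfolding weyl_center_def by blast
qed

lemma Z_zero: "0 \<in> weyl_center (A_h h)"
  unfolding weyl_center_def using A_zero by simp

lemma Z_smult: "a \<in> weyl_center (A_h h) \<Longrightarrow> weyl_smult c a \<in> weyl_center (A_h h)"
proof -
  assume a: "a \<in> weyl_center (A_h h)"
  have "weyl_smult c a \<cdot>\<^sub>W d = d \<cdot>\<^sub>W weyl_smult c a" if "d \<in> A_h h" for d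
  proof -
    have "a \<cdot>\<^sub>W d = d \<cdot>\<^sub>W a" using a that unfolding weyl_center_def by blast
    then show ?thesis by (simp only: weyl_smult_mult weyl_mult_smult)
  qed
  moreover have "weyl_smult c a \<in> A_h h" using a unfolding weyl_center_def by (blast intro: A_smult)
  ultimately show ?thesis unfolding weyl_center_def by blast
qed

lemma Z_uminus: "a \<in> weyl_center (A_h h) \<Longrightarrow> - a \<in> weyl_center (A_h h)"
  using Z_smult[of a h "-1"] by (simp add: wsmult_neg1)

lemma CS_add: "c1 \<in> comm_set u (A_h h) \<Longrightarrow> c2 \<in> comm_set u (A_h h) \<Longrightarrow> c1 + c2 \<in> comm_set u (A_h h)"
  unfolding comm_set_def by (auto simp: weyl_comm_add[symmetric] intro!: A_add)

lemma CS_zero: "0 \<in> comm_set u (A_h h)"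
  unfolding comm_set_def using A_zero by force

lemma CS_sum: "(\<And>i. i \<in> K \<Longrightarrow> f i \<in> comm_set u (A_h h)) \<Longrightarrow> (\<Sum>i\<in>K. f i) \<in> comm_set u (A_h h)"
  by (induction K rule: infinite_finite_induct) (auto intro: CS_zero CS_add)

lemma CS_smult: "c \<in> comm_set u (A_h h) \<Longrightarrow> weyl_smult d c \<in> comm_set u (A_h h)"
  unfolding comm_set_def by (auto simp: weyl_comm_smult[symmetric] intro!: A_smult)

lemma CS_Z:
  assumes z: "z \<in> weyl_center (A_h h)" and u: "u \<in> A_h h" and c: "c \<in> comm_set u (A_h h)"
  shows "z \<cdot>\<^sub>W c \<in> comm_set u (A_h h)"
proof -
  from c obtain a where a: "a \<in> A_h h" and ca: "c = weyl_comm u a" unfolding comm_set_def by blast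
  have "z \<cdot>\<^sub>W c = weyl_comm u (z \<cdot>\<^sub>W a)"
    unfolding ca by (rule weyl_comm_central[symmetric], rule center_comm[OF z u])
  moreover have "z \<cdot>\<^sub>W a \<in> A_h h" using z a Z_A A_mult by blast
  ultimately show ?thesis unfolding comm_set_def by blast
qed

definition Sspan :: "'a::field poly \<Rightarrow> (nat \<times> nat) set \<Rightarrow> 'a weyl set" where
  "Sspan h I = {\<Sum>ij\<in>I. zz ij \<cdot>\<^sub>W ww h ij | zz. \<forall>ij\<in>I. zz ij \<in> weyl_center (A_h h)}"

lemma SspanI: "(\<And>ij. ij \<in> I \<Longrightarrow> zz ij \<in> weyl_center (A_h h)) \<Longrightarrow> x = (\<Sum>ij\<in>I. zz ij \<cdot>\<^sub>W ww h ij) \<Longrightarrow> x \<in> Sspan h I"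
  unfolding Sspan_def by blast

lemma S_zero: "0 \<in> Sspan h I"
  by (rule SspanI[where zz = "\<lambda>_. 0"]) (simp_all add: Z_zero)

lemma S_add: "a \<in> Sspan h I \<Longrightarrow> b \<in> Sspan h I \<Longrightarrow> a + b \<in> Sspan h I"
proof -
  assume "a \<in> Sspan h I" "b \<in> Sspan h I"
  then obtain z1 z2 where z1: "\<forall>ij\<in>I. z1 ij \<in> weyl_center (A_h h)" "a = (\<Sum>ij\<in>I. z1 ij \<cdot>\<^sub>W ww h ij)"
    and z2: "\<forall>ij\<in>I. z2 ij \<in> weyl_center (A_h h)" "b = (\<Sum>ij\<in>I. z2 ij \<cdot>\<^sub>W ww h ij)"
    unfolding Sspan_def by blast
  have "a + b = (\<Sum>ij\<in>I. (z1 ij + z2 ij) \<cdot>\<^sub>W ww h ij)"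
    using z1 z2 by (simp add: weyl_add_mult sum.distrib)
  moreover have "\<And>ij. ij \<in> I \<Longrightarrow> z1 ij + z2 ij \<in> weyl_center (A_h h)" using z1 z2 by (blast intro: Z_add)
  ultimately show ?thesis by (intro SspanI[where zz = "\<lambda>ij. z1 ij + z2 ij"])
qed

lemma S_sum: "(\<And>i. i \<in> K \<Longrightarrow> f i \<in> Sspan h I) \<Longrightarrow> (\<Sum>i\<in>K. f i) \<in> Sspan h I"
  by (induction K rule: infinite_finite_induct) (auto intro: S_zero S_add)

lemma S_single:
  assumes "finite I" "k \<in> I" "z \<in> weyl_center (A_h h)"
  shows "z \<cdot>\<^sub>W ww h k \<in> Sspan h I"
proof -
  have "(\<Sum>ij\<in>I. (if ij = k then z else 0) \<cdot>\<^sub>W ww h ij) = z \<cdot>\<^sub>W ww h k"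
    using assms by (simp add: if_distrib[where f = "\<lambda>a. a \<cdot>\<^sub>W _"] sum.delta cong: if_cong)
  moreover have "\<And>ij. ij \<in> I \<Longrightarrow> (if ij = k then z else 0) \<in> weyl_center (A_h h)"
    using assms Z_zero by auto
  ultimately show ?thesis by (intro SspanI[where zz = "\<lambda>ij. if ij = k then z else 0"]) simp_all
qed



lemma commX_ee: "weyl_comm weyl_x (ee h i j) = weyl_smult (- of_nat j) (ww h (i, j - 1))"
proof (cases j)
  case 0
  then show ?thesis by (simp only: ee_wp comm_X_wpY) simp
next
  case (Suc j')
  show ?thesis unfolding Suc by (simp only: ee_wp comm_X_wpY diff_Suc_1 ww_shift)
qed

lemma commY_ee_last:
  fixes h :: "'a::field poly"
  assumes p: "CHAR('a) > 0"
  shows "weyl_comm (yhat h) (ee h i (CHAR('a) - 1)) = weyl_smult (of_nat i) (ww h (i - 1, CHAR('a) - 1))"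
proof -
  let ?q = "CHAR('a) - 1"
  have "weyl_comm (yhat h) (ee h i ?q) = wp (h * pderiv (monom 1 i) * h ^ ?q) \<cdot>\<^sub>W Yp ?q"
    unfolding ee_def Xp_wp by (rule part_a2_one[OF p])
  also have "h * pderiv (monom 1 i) * h ^ ?q = smult (of_nat i) (qq h (i - 1, ?q))"
  proof -
    have m: "monom (of_nat i * 1) (i - 1) = smult (of_nat i) (monom (1::'a) (i - 1))" by (simp add: smult_monom)
    show ?thesis unfolding pderiv_monom m qq_def by (simp only: mult_smult_left mult_smult_right fst_conv snd_conv)
  qed
  finally show ?thesis by (simp add: wp_smult weyl_smult_mult ww_qq)
qed

lemma commY_ee_low:
  fixes h :: "'a::field poly"
  assumes p: "CHAR('a) > 0" and j: "j + 2 \<le> CHAR('a)"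
  shows "weyl_comm (yhat h) (ee h i j) \<in> comm_set weyl_x (A_h h)"
  unfolding ee_def Xp_wp by (rule part_a1_one[OF p j])

lemma ee_in_A: "ee h i j \<in> A_h h"
  unfolding ee_def Xp_wp weyl_assoc by (intro A_mult wp_in_A hy_in_A)

lemma Zc_comm: "z \<in> Zc h \<Longrightarrow> z \<cdot>\<^sub>W u = u \<cdot>\<^sub>W z"
  unfolding Zc_def by blast

lemma CS_I: "a \<in> A \<Longrightarrow> x = weyl_comm u a \<Longrightarrow> x \<in> comm_set u A"
  unfolding comm_set_def by blast

definition Iset :: "nat \<Rightarrow> (nat \<times> nat) set" where
  "Iset p = ({0..p-1} \<times> {0..p-1}) - {(p-1, p-1)}"

lemma finite_Iset: "finite (Iset p)"
  unfolding Iset_def by simp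

lemma CX_sub_S:
  fixes h :: "'a::field poly"
  assumes p: "CHAR('a) > 0" and c: "c \<in> comm_set weyl_x (A_h h)"
  shows "c \<in> Sspan h (Iset CHAR('a))"
proof -
  let ?p = "CHAR('a)"
  from c obtain a where a: "a \<in> A_h h" and ca: "c = weyl_comm weyl_x a" unfolding comm_set_def by blast
  from decompA[OF p a] obtain zz where zz: "\<And>ij. zz ij \<in> Zc h"
    and aeq: "a = (\<Sum>ij\<in>{..<?p} \<times> {..<?p}. zz ij \<cdot>\<^sub>W ee h (fst ij) (snd ij))" by blast
  have "c = (\<Sum>ij\<in>{..<?p} \<times> {..<?p}. zz ij \<cdot>\<^sub>W weyl_comm weyl_x (ee h (fst ij) (snd ij)))"
    unfolding ca aeq weyl_comm_sum
    by (rule sum.cong[OF refl], rule weyl_comm_central, rule Zc_comm[OF zz])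
  also have "\<dots> \<in> Sspan h (Iset ?p)"
  proof (rule S_sum)
    fix ij assume ij: "ij \<in> {..<?p} \<times> {..<?p}"
    obtain i j where ijeq: "ij = (i,j)" by force
    show "zz ij \<cdot>\<^sub>W weyl_comm weyl_x (ee h (fst ij) (snd ij)) \<in> Sspan h (Iset ?p)"
    proof (cases "j = 0")
      case True
      then show ?thesis using ijeq by (simp add: commX_ee S_zero)
    next
      case False
      have eq: "zz ij \<cdot>\<^sub>W weyl_comm weyl_x (ee h (fst ij) (snd ij)) = weyl_smult (- of_nat j) (zz ij) \<cdot>\<^sub>W ww h (i, j - 1)"
        using ijeq by (simp add: commX_ee weyl_mult_smult weyl_smult_mult)
      have "(i, j - 1) \<in> Iset ?p" using ij ijeq False unfolding Iset_def by auto
      then show ?thesis unfolding eq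
        by (intro S_single finite_Iset Z_smult Zc_center zz)
    qed
  qed
  finally show ?thesis .
qed

lemma CY_sub_S:
  fixes h :: "'a::field poly"
  assumes p: "CHAR('a) > 0" and c: "c \<in> comm_set (yhat h) (A_h h)"
  shows "c \<in> Sspan h (Iset CHAR('a))"
proof -
  let ?p = "CHAR('a)"
  from c obtain a where a: "a \<in> A_h h" and ca: "c = weyl_comm (yhat h) a" unfolding comm_set_def by blast
  from decompA[OF p a] obtain zz where zz: "\<And>ij. zz ij \<in> Zc h"
    and aeq: "a = (\<Sum>ij\<in>{..<?p} \<times> {..<?p}. zz ij \<cdot>\<^sub>W ee h (fst ij) (snd ij))" by blast
  have "c = (\<Sum>ij\<in>{..<?p} \<times> {..<?p}. zz ij \<cdot>\<^sub>W weyl_comm (yhat h) (ee h (fst ij) (snd ij)))"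
    unfolding ca aeq weyl_comm_sum
    by (rule sum.cong[OF refl], rule weyl_comm_central, rule Zc_comm[OF zz])
  also have "\<dots> \<in> Sspan h (Iset ?p)"
  proof (rule S_sum)
    fix ij assume ij: "ij \<in> {..<?p} \<times> {..<?p}"
    obtain i j where ijeq: "ij = (i,j)" by force
    show "zz ij \<cdot>\<^sub>W weyl_comm (yhat h) (ee h (fst ij) (snd ij)) \<in> Sspan h (Iset ?p)"
    proof (cases "j + 2 \<le> ?p")
      case True
      have "zz ij \<cdot>\<^sub>W weyl_comm (yhat h) (ee h i j) \<in> comm_set weyl_x (A_h h)"
        by (intro CS_Z Zc_center zz x_in_A commY_ee_low[OF p True])
      then show ?thesis using ijeq CX_sub_S[OF p] by simp
    next
      case False
      then have jq: "j = ?p - 1" using ij ijeq by auto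
      have eq: "zz ij \<cdot>\<^sub>W weyl_comm (yhat h) (ee h (fst ij) (snd ij)) = weyl_smult (of_nat i) (zz ij) \<cdot>\<^sub>W ww h (i - 1, ?p - 1)"
        unfolding ijeq jq fst_conv snd_conv by (simp only: commY_ee_last[OF p] weyl_mult_smult weyl_smult_mult)
      show ?thesis
      proof (cases "i = 0")
        case True
        then show ?thesis unfolding eq by (simp add: S_zero)
      next
        case False
        have "(i - 1, ?p - 1) \<in> Iset ?p" using ij ijeq False unfolding Iset_def by auto
        then show ?thesis unfolding eq
          by (intro S_single finite_Iset Z_smult Zc_center zz)
      qed
    qed
  qed
  finally show ?thesis .
qed

definition Cset :: "'a::field poly \<Rightarrow> 'a weyl set" where
  "Cset h = {u + v | u v. u \<in> comm_set weyl_x (A_h h) \<and> v \<in> comm_set (yhat h) (A_h h)}"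

lemma C_sub_S:
  fixes h :: "'a::field poly"
  assumes p: "CHAR('a) > 0"
  shows "Cset h \<subseteq> Sspan h (Iset CHAR('a))"
  unfolding Cset_def using CX_sub_S[OF p] CY_sub_S[OF p] S_add by blast

lemma C_add: "a \<in> Cset h \<Longrightarrow> b \<in> Cset h \<Longrightarrow> a + b \<in> Cset h"
proof -
  assume "a \<in> Cset h" "b \<in> Cset h"
  then obtain u1 v1 u2 v2 where "u1 \<in> comm_set weyl_x (A_h h)" "v1 \<in> comm_set (yhat h) (A_h h)" "a = u1 + v1"
    "u2 \<in> comm_set weyl_x (A_h h)" "v2 \<in> comm_set (yhat h) (A_h h)" "b = u2 + v2"
    unfolding Cset_def by blast
  moreover have "a + b = (u1 + u2) + (v1 + v2)" using calculation by (simp add: algebra_simps)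
  ultimately show ?thesis unfolding Cset_def by (blast intro: CS_add)
qed

lemma C_zero: "0 \<in> Cset h"
  unfolding Cset_def using CS_zero by force

lemma CX_sub_C: "u \<in> comm_set weyl_x (A_h h) \<Longrightarrow> u \<in> Cset h"
  unfolding Cset_def using CS_zero by force

lemma CY_sub_C: "v \<in> comm_set (yhat h) (A_h h) \<Longrightarrow> v \<in> Cset h"
  unfolding Cset_def using CS_zero by force

lemma C_sum: "(\<And>i. i \<in> K \<Longrightarrow> f i \<in> Cset h) \<Longrightarrow> (\<Sum>i\<in>K. f i) \<in> Cset h"
  by (induction K rule: infinite_finite_induct) (auto intro: C_zero C_add)

lemma S_sub_C:
  fixes h :: "'a::field poly"
  assumes p: "CHAR('a) > 0"
  shows "Sspan h (Iset CHAR('a)) \<subseteq> Cset h"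
proof
  let ?p = "CHAR('a)"
  fix x assume "x \<in> Sspan h (Iset ?p)"
  then obtain zz where zz: "\<forall>ij\<in>Iset ?p. zz ij \<in> weyl_center (A_h h)"
    and x: "x = (\<Sum>ij\<in>Iset ?p. zz ij \<cdot>\<^sub>W ww h ij)" unfolding Sspan_def by blast
  have "zz ij \<cdot>\<^sub>W ww h ij \<in> Cset h" if ij: "ij \<in> Iset ?p" for ij
  proof -
    obtain i j where ijeq: "ij = (i,j)" by force
    have z: "zz ij \<in> weyl_center (A_h h)" using zz ij by blast
    have zA: "zz ij \<cdot>\<^sub>W ee h i' j' \<in> A_h h" for i' j' using z Z_A ee_in_A A_mult by blast
    show ?thesis
    proof (cases "j + 2 \<le> ?p")
      case True
      have nz: "(of_nat (Suc j) :: 'a) \<noteq> 0"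
      proof
        assume "(of_nat (Suc j) :: 'a) = 0"
        then have "?p dvd Suc j" by (simp only: of_nat_eq_0_iff_char_dvd)
        then have "?p \<le> Suc j" by (rule dvd_imp_le) simp
        then show False using True by simp
      qed
      have "weyl_comm weyl_x (weyl_smult (- inverse (of_nat (Suc j))) (zz ij \<cdot>\<^sub>W ee h i (Suc j)))
          = weyl_smult (- inverse (of_nat (Suc j))) (zz ij \<cdot>\<^sub>W weyl_comm weyl_x (ee h i (Suc j)))"
        by (simp only: weyl_comm_smult weyl_comm_central[OF center_comm[OF z x_in_A]])
      also have "\<dots> = weyl_smult ((- inverse (of_nat (Suc j))) * (- of_nat (Suc j))) (zz ij \<cdot>\<^sub>W ww h (i, j))"
        by (simp only: commX_ee weyl_mult_smult wsmult_smult diff_Suc_1)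
      also have "(- inverse (of_nat (Suc j))) * (- of_nat (Suc j)) = (1::'a)"
        using nz by (subst minus_mult_minus, rule left_inverse)
      finally have "zz ij \<cdot>\<^sub>W ww h ij = weyl_comm weyl_x (weyl_smult (- inverse (of_nat (Suc j))) (zz ij \<cdot>\<^sub>W ee h i (Suc j)))"
        using ijeq by simp
      moreover have "weyl_smult (- inverse (of_nat (Suc j))) (zz ij \<cdot>\<^sub>W ee h i (Suc j)) \<in> A_h h"
        by (intro A_smult zA)
      ultimately show ?thesis using ijeq by (intro CX_sub_C CS_I) simp_all
    next
      case False
      then have jq: "j = ?p - 1" and ip: "i + 2 \<le> ?p" using ij ijeq unfolding Iset_def by auto
      have nz: "(of_nat (Suc i) :: 'a) \<noteq> 0"
      proof
        assume "(of_nat (Suc i) :: 'a) = 0"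
        then have "?p dvd Suc i" by (simp only: of_nat_eq_0_iff_char_dvd)
        then have "?p \<le> Suc i" by (rule dvd_imp_le) simp
        then show False using ip by simp
      qed
      have "weyl_comm (yhat h) (weyl_smult (inverse (of_nat (Suc i))) (zz ij \<cdot>\<^sub>W ee h (Suc i) (?p - 1)))
          = weyl_smult (inverse (of_nat (Suc i))) (zz ij \<cdot>\<^sub>W weyl_comm (yhat h) (ee h (Suc i) (?p - 1)))"
        by (simp only: weyl_comm_smult weyl_comm_central[OF center_comm[OF z yhat_in_A]])
      also have "\<dots> = weyl_smult (inverse (of_nat (Suc i)) * of_nat (Suc i)) (zz ij \<cdot>\<^sub>W ww h (i, ?p - 1))"
        by (simp only: commY_ee_last[OF p] weyl_mult_smult wsmult_smult diff_Suc_1)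
      also have "inverse (of_nat (Suc i)) * of_nat (Suc i) = (1::'a)"
        using nz by (rule left_inverse)
      finally have "zz ij \<cdot>\<^sub>W ww h ij = weyl_comm (yhat h) (weyl_smult (inverse (of_nat (Suc i))) (zz ij \<cdot>\<^sub>W ee h (Suc i) (?p - 1)))"
        using ijeq jq by simp
      moreover have "weyl_smult (inverse (of_nat (Suc i))) (zz ij \<cdot>\<^sub>W ee h (Suc i) (?p - 1)) \<in> A_h h"
        by (intro A_smult zA)
      ultimately show ?thesis using ijeq by (intro CY_sub_C CS_I) simp_all
    qed
  qed
  then show "x \<in> Cset h" unfolding x by (rule C_sum)
qed



lemma P1:
  fixes h :: "'a::field poly"
  assumes p: "CHAR('a) > 0" and z: "z \<in> weyl_center (A_h h)" and j: "j \<le> CHAR('a) - 2"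
  shows "weyl_comm (yhat h) (z \<cdot>\<^sub>W wp f \<cdot>\<^sub>W wp (h ^ j) \<cdot>\<^sub>W Yp j) \<in> comm_set weyl_x (A_h h)"
proof -
  have p2: "CHAR('a) \<ge> 2" using p CHAR_not_1'[where 'a = 'a] by linarith
  then have j2: "j + 2 \<le> CHAR('a)" using j by simp
  have "z \<cdot>\<^sub>W wp f \<cdot>\<^sub>W wp (h ^ j) \<cdot>\<^sub>W Yp j = z \<cdot>\<^sub>W (wp f \<cdot>\<^sub>W wp (h ^ j) \<cdot>\<^sub>W Yp j)"
    by (simp only: weyl_assoc)
  then have "weyl_comm (yhat h) (z \<cdot>\<^sub>W wp f \<cdot>\<^sub>W wp (h ^ j) \<cdot>\<^sub>W Yp j)
     = z \<cdot>\<^sub>W weyl_comm (yhat h) (wp f \<cdot>\<^sub>W wp (h ^ j) \<cdot>\<^sub>W Yp j)"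
    using weyl_comm_central[OF center_comm[OF z yhat_in_A]] by simp
  also have "\<dots> \<in> comm_set weyl_x (A_h h)"
    by (intro CS_Z[OF z x_in_A] part_a1_one[OF p j2])
  finally show ?thesis .
qed

lemma P2:
  fixes h :: "'a::field poly"
  assumes p: "CHAR('a) > 0" and z: "z \<in> weyl_center (A_h h)"
  shows "weyl_comm (yhat h) (z \<cdot>\<^sub>W wp f \<cdot>\<^sub>W wp (h ^ (CHAR('a) - 1)) \<cdot>\<^sub>W Yp (CHAR('a) - 1))
     = z \<cdot>\<^sub>W wp h \<cdot>\<^sub>W wp (pderiv f) \<cdot>\<^sub>W wp (h ^ (CHAR('a) - 1)) \<cdot>\<^sub>W Yp (CHAR('a) - 1)"
proof -
  let ?q = "CHAR('a) - 1"
  have "z \<cdot>\<^sub>W wp f \<cdot>\<^sub>W wp (h ^ ?q) \<cdot>\<^sub>W Yp ?q = z \<cdot>\<^sub>W (wp f \<cdot>\<^sub>W wp (h ^ ?q) \<cdot>\<^sub>W Yp ?q)"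
    by (simp only: weyl_assoc)
  then have "weyl_comm (yhat h) (z \<cdot>\<^sub>W wp f \<cdot>\<^sub>W wp (h ^ ?q) \<cdot>\<^sub>W Yp ?q)
     = z \<cdot>\<^sub>W weyl_comm (yhat h) (wp f \<cdot>\<^sub>W wp (h ^ ?q) \<cdot>\<^sub>W Yp ?q)"
    using weyl_comm_central[OF center_comm[OF z yhat_in_A]] by simp
  also have "\<dots> = z \<cdot>\<^sub>W (wp (h * pderiv f * h ^ ?q) \<cdot>\<^sub>W Yp ?q)"
    by (simp only: part_a2_one[OF p])
  also have "\<dots> = z \<cdot>\<^sub>W wp h \<cdot>\<^sub>W wp (pderiv f) \<cdot>\<^sub>W wp (h ^ ?q) \<cdot>\<^sub>W Yp ?q"
    by (simp only: wp_mult weyl_assoc)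
  finally show ?thesis .
qed

lemma P3:
  fixes h :: "'a::field poly"
  assumes p: "CHAR('a) > 0"
  shows "Cset h = {\<Sum>ij\<in>Iset CHAR('a). zz ij \<cdot>\<^sub>W ww h ij | zz. \<forall>ij\<in>Iset CHAR('a). zz ij \<in> weyl_center (A_h h)}"
  using C_sub_S[OF p] S_sub_C[OF p] unfolding Sspan_def by blast

lemma J_facts:
  assumes p: "(p::nat) > 0"
  shows "Iset p = ({..<p} \<times> {..<p}) - {(p - 1, p - 1)}" "(p - 1, p - 1) \<in> {..<p} \<times> {..<p}"
    "Iset p \<subseteq> {..<p} \<times> {..<p}"
proof -
  have "{0..p-1} = {..<p}" using p by auto
  then show "Iset p = ({..<p} \<times> {..<p}) - {(p - 1, p - 1)}" unfolding Iset_def by simp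
  then show "Iset p \<subseteq> {..<p} \<times> {..<p}" by auto
  show "(p - 1, p - 1) \<in> {..<p} \<times> {..<p}" using p by simp
qed

lemma Z_Z1:
  fixes h :: "'a::field poly"
  assumes h: "h \<noteq> 0"
  shows "z \<in> weyl_center (A_h h) \<Longrightarrow> z \<in> Z1set"
  by (rule center_sub_Z1[OF h])

lemma zero_Z1: "0 \<in> Z1set"
  unfolding Z1set_def by simp

lemma direct_gen:
  fixes h :: "'a::field poly"
  assumes p: "CHAR('a) > 0" and h: "h \<noteq> 0"
    and zz: "\<And>ij. ij \<in> {..<CHAR('a)} \<times> {..<CHAR('a)} \<Longrightarrow> zz ij \<in> weyl_center (A_h h)"
    and s0: "(\<Sum>ij\<in>{..<CHAR('a)} \<times> {..<CHAR('a)}. zz ij \<cdot>\<^sub>W ww h ij) = 0"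
    and ij: "ij \<in> {..<CHAR('a)} \<times> {..<CHAR('a)}"
  shows "zz ij \<cdot>\<^sub>W ww h ij = 0"
  using direct_J[OF p h _ _ ij, of zz] zz s0 Z_Z1[OF h] unfolding ww_qq by blast

lemma P4:
  fixes h :: "'a::field poly"
  assumes p: "CHAR('a) > 0" and h: "h \<noteq> 0"
    and zz: "\<forall>ij\<in>Iset CHAR('a). zz ij \<in> weyl_center (A_h h)"
    and s0: "(\<Sum>ij\<in>Iset CHAR('a). zz ij \<cdot>\<^sub>W ww h ij) = 0"
  shows "\<forall>ij\<in>Iset CHAR('a). zz ij \<cdot>\<^sub>W ww h ij = 0"
proof
  let ?p = "CHAR('a)"
  let ?J = "{..<?p} \<times> {..<?p}"
  define zz' where "zz' ij = (if ij \<in> Iset ?p then zz ij else 0)" for ij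
  have zz'Z: "zz' ij \<in> weyl_center (A_h h)" for ij using zz Z_zero unfolding zz'_def by auto
  have "(\<Sum>ij\<in>?J. zz' ij \<cdot>\<^sub>W ww h ij) = (\<Sum>ij\<in>?J. if ij \<in> Iset ?p then zz ij \<cdot>\<^sub>W ww h ij else 0)"
    unfolding zz'_def by (rule sum.cong) auto
  also have "\<dots> = (\<Sum>ij\<in>?J \<inter> Iset ?p. zz ij \<cdot>\<^sub>W ww h ij)"
    by (rule sum.inter_restrict[symmetric]) simp
  also have "?J \<inter> Iset ?p = Iset ?p" using J_facts(3)[OF p] by blast
  finally have s0': "(\<Sum>ij\<in>?J. zz' ij \<cdot>\<^sub>W ww h ij) = 0" using s0 by simp
  fix ij assume ij: "ij \<in> Iset ?p"
  then have "ij \<in> ?J" using J_facts(3)[OF p] by blast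
  from direct_gen[OF p h zz'Z s0' this] show "zz ij \<cdot>\<^sub>W ww h ij = 0" using ij unfolding zz'_def by simp
qed



lemma Z_H_comm: "z \<in> weyl_center (A_h h) \<Longrightarrow> z \<cdot>\<^sub>W (wp h \<cdot>\<^sub>W e) = wp h \<cdot>\<^sub>W (z \<cdot>\<^sub>W e)"
proof -
  assume z: "z \<in> weyl_center (A_h h)"
  have c: "z \<cdot>\<^sub>W wp h = wp h \<cdot>\<^sub>W z" by (rule center_comm[OF z wp_in_A])
  have "z \<cdot>\<^sub>W (wp h \<cdot>\<^sub>W e) = (z \<cdot>\<^sub>W wp h) \<cdot>\<^sub>W e" by (rule weyl_assoc[symmetric])
  also have "\<dots> = (wp h \<cdot>\<^sub>W z) \<cdot>\<^sub>W e" unfolding c ..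
  also have "\<dots> = wp h \<cdot>\<^sub>W (z \<cdot>\<^sub>W e)" by (rule weyl_assoc)
  finally show ?thesis .
qed

lemma lastform:
  assumes z: "z \<in> weyl_center (A_h h)"
  shows "wp h \<cdot>\<^sub>W z \<cdot>\<^sub>W Xp q \<cdot>\<^sub>W wp (h ^ q) \<cdot>\<^sub>W Yp q = z \<cdot>\<^sub>W ww h (q,q)"
proof -
  have "wp h \<cdot>\<^sub>W z \<cdot>\<^sub>W Xp q \<cdot>\<^sub>W wp (h ^ q) \<cdot>\<^sub>W Yp q = wp h \<cdot>\<^sub>W (z \<cdot>\<^sub>W ee h q q)"
    by (simp only: ee_def weyl_assoc)
  also have "\<dots> = z \<cdot>\<^sub>W ww h (q,q)"
    by (simp only: ww_ee Z_H_comm[OF z])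
  finally show ?thesis .
qed

lemma ww_ee': "ww h ij = wp h \<cdot>\<^sub>W ee h (fst ij) (snd ij)"
  using ww_ee[of h "fst ij" "snd ij"] by simp

lemma Zc_Z: "z \<in> Zc h \<Longrightarrow> z \<in> weyl_center (A_h h)"
  by (rule Zc_center)

lemma P5:
  fixes h :: "'a::field poly"
  assumes p: "CHAR('a) > 0"
  shows "{wp h \<cdot>\<^sub>W a | a. a \<in> A_h h} =
     {u + wp h \<cdot>\<^sub>W z \<cdot>\<^sub>W Xp (CHAR('a) - 1) \<cdot>\<^sub>W wp (h ^ (CHAR('a) - 1)) \<cdot>\<^sub>W Yp (CHAR('a) - 1)
       | u z. u \<in> Cset h \<and> z \<in> weyl_center (A_h h)}"
proof (intro equalityI subsetI)
  let ?p = "CHAR('a)"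
  let ?q = "?p - 1"
  let ?J = "{..<?p} \<times> {..<?p}"
  fix x assume "x \<in> {wp h \<cdot>\<^sub>W a | a. a \<in> A_h h}"
  then obtain a where a: "a \<in> A_h h" and x: "x = wp h \<cdot>\<^sub>W a" by blast
  from decompA[OF p a] obtain zz where zz: "\<And>ij. zz ij \<in> Zc h"
    and aeq: "a = (\<Sum>ij\<in>?J. zz ij \<cdot>\<^sub>W ee h (fst ij) (snd ij))" by blast
  have zzZ: "zz ij \<in> weyl_center (A_h h)" for ij by (rule Zc_Z[OF zz])
  have "x = (\<Sum>ij\<in>?J. zz ij \<cdot>\<^sub>W ww h ij)"
    unfolding x aeq weyl_mult_sum ww_ee' by (rule sum.cong[OF refl], rule Z_H_comm[OF zzZ, symmetric])
  also have "\<dots> = zz (?q,?q) \<cdot>\<^sub>W ww h (?q,?q) + (\<Sum>ij\<in>?J - {(?q,?q)}. zz ij \<cdot>\<^sub>W ww h ij)"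
    by (rule sum.remove) (use J_facts(2)[OF p] in simp_all)
  also have "?J - {(?q,?q)} = Iset ?p" using J_facts(1)[OF p] by simp
  finally have xe: "x = (\<Sum>ij\<in>Iset ?p. zz ij \<cdot>\<^sub>W ww h ij) + wp h \<cdot>\<^sub>W zz (?q,?q) \<cdot>\<^sub>W Xp ?q \<cdot>\<^sub>W wp (h ^ ?q) \<cdot>\<^sub>W Yp ?q"
    by (simp add: lastform[OF zzZ] add.commute)
  have "(\<Sum>ij\<in>Iset ?p. zz ij \<cdot>\<^sub>W ww h ij) \<in> Cset h"
    using S_sub_C[OF p] SspanI[of "Iset ?p" zz h, OF zzZ refl] by blast
  then show "x \<in> {u + wp h \<cdot>\<^sub>W z \<cdot>\<^sub>W Xp ?q \<cdot>\<^sub>W wp (h ^ ?q) \<cdot>\<^sub>W Yp ?q | u z. u \<in> Cset h \<and> z \<in> weyl_center (A_h h)}"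
    using xe zzZ by blast
next
  let ?p = "CHAR('a)"
  let ?q = "?p - 1"
  fix x assume "x \<in> {u + wp h \<cdot>\<^sub>W z \<cdot>\<^sub>W Xp ?q \<cdot>\<^sub>W wp (h ^ ?q) \<cdot>\<^sub>W Yp ?q | u z. u \<in> Cset h \<and> z \<in> weyl_center (A_h h)}"
  then obtain u z where u: "u \<in> Cset h" and z: "z \<in> weyl_center (A_h h)"
    and x: "x = u + wp h \<cdot>\<^sub>W z \<cdot>\<^sub>W Xp ?q \<cdot>\<^sub>W wp (h ^ ?q) \<cdot>\<^sub>W Yp ?q" by blast
  from u C_sub_S[OF p] obtain zz where zz: "\<forall>ij\<in>Iset ?p. zz ij \<in> weyl_center (A_h h)"
    and ue: "u = (\<Sum>ij\<in>Iset ?p. zz ij \<cdot>\<^sub>W ww h ij)" unfolding Sspan_def by blast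
  have "u = wp h \<cdot>\<^sub>W (\<Sum>ij\<in>Iset ?p. zz ij \<cdot>\<^sub>W ee h (fst ij) (snd ij))"
    unfolding ue weyl_mult_sum ww_ee'
  proof (rule sum.cong[OF refl])
    fix ij assume "ij \<in> Iset ?p"
    then have "zz ij \<in> weyl_center (A_h h)" using zz by blast
    then show "zz ij \<cdot>\<^sub>W (wp h \<cdot>\<^sub>W ee h (fst ij) (snd ij)) = wp h \<cdot>\<^sub>W (zz ij \<cdot>\<^sub>W ee h (fst ij) (snd ij))"
      by (rule Z_H_comm)
  qed
  moreover have "wp h \<cdot>\<^sub>W z \<cdot>\<^sub>W Xp ?q \<cdot>\<^sub>W wp (h ^ ?q) \<cdot>\<^sub>W Yp ?q = wp h \<cdot>\<^sub>W (z \<cdot>\<^sub>W ee h ?q ?q)"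
    by (simp only: ee_def weyl_assoc)
  ultimately have "x = wp h \<cdot>\<^sub>W ((\<Sum>ij\<in>Iset ?p. zz ij \<cdot>\<^sub>W ee h (fst ij) (snd ij)) + z \<cdot>\<^sub>W ee h ?q ?q)"
    using x by (simp add: weyl_mult_add)
  moreover have "(\<Sum>ij\<in>Iset ?p. zz ij \<cdot>\<^sub>W ee h (fst ij) (snd ij)) + z \<cdot>\<^sub>W ee h ?q ?q \<in> A_h h"
  proof (intro A_add A_sum)
    show "zz ij \<cdot>\<^sub>W ee h (fst ij) (snd ij) \<in> A_h h" if "ij \<in> Iset ?p" for ij
      using zz that by (blast intro: A_mult[OF Z_A ee_in_A])
    show "z \<cdot>\<^sub>W ee h ?q ?q \<in> A_h h" using z by (blast intro: A_mult[OF Z_A ee_in_A])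
  qed
  ultimately show "x \<in> {wp h \<cdot>\<^sub>W a | a. a \<in> A_h h}" by blast
qed

lemma P6:
  fixes h :: "'a::field poly"
  assumes p: "CHAR('a) > 0" and h: "h \<noteq> 0"
  shows "Cset h \<inter> {wp h \<cdot>\<^sub>W z \<cdot>\<^sub>W Xp (CHAR('a) - 1) \<cdot>\<^sub>W wp (h ^ (CHAR('a) - 1)) \<cdot>\<^sub>W Yp (CHAR('a) - 1)
       | z. z \<in> weyl_center (A_h h)} = {0}"
proof (intro equalityI subsetI)
  let ?p = "CHAR('a)"
  let ?q = "?p - 1"
  let ?J = "{..<?p} \<times> {..<?p}"
  fix x assume "x \<in> Cset h \<inter> {wp h \<cdot>\<^sub>W z \<cdot>\<^sub>W Xp ?q \<cdot>\<^sub>W wp (h ^ ?q) \<cdot>\<^sub>W Yp ?q | z. z \<in> weyl_center (A_h h)}"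
  then obtain z where xC: "x \<in> Cset h" and z: "z \<in> weyl_center (A_h h)"
    and x: "x = wp h \<cdot>\<^sub>W z \<cdot>\<^sub>W Xp ?q \<cdot>\<^sub>W wp (h ^ ?q) \<cdot>\<^sub>W Yp ?q" by blast
  have xz: "x = z \<cdot>\<^sub>W ww h (?q,?q)" unfolding x by (rule lastform[OF z])
  from xC C_sub_S[OF p] obtain zz where zz: "\<forall>ij\<in>Iset ?p. zz ij \<in> weyl_center (A_h h)"
    and xe: "x = (\<Sum>ij\<in>Iset ?p. zz ij \<cdot>\<^sub>W ww h ij)" unfolding Sspan_def by blast
  define zz' where "zz' ij = (if ij \<in> Iset ?p then zz ij else - z)" for ij
  have zz'Z: "zz' ij \<in> weyl_center (A_h h)" for ij using zz Z_uminus[OF z] unfolding zz'_def by auto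
  have nI: "(?q,?q) \<notin> Iset ?p" unfolding Iset_def by simp
  have "(\<Sum>ij\<in>?J. zz' ij \<cdot>\<^sub>W ww h ij) = zz' (?q,?q) \<cdot>\<^sub>W ww h (?q,?q) + (\<Sum>ij\<in>?J - {(?q,?q)}. zz' ij \<cdot>\<^sub>W ww h ij)"
    by (rule sum.remove) (use J_facts(2)[OF p] in simp_all)
  also have "?J - {(?q,?q)} = Iset ?p" using J_facts(1)[OF p] by simp
  also have "(\<Sum>ij\<in>Iset ?p. zz' ij \<cdot>\<^sub>W ww h ij) = x"
    unfolding xe zz'_def by (rule sum.cong) auto
  also have "zz' (?q,?q) \<cdot>\<^sub>W ww h (?q,?q) = - x"
    unfolding zz'_def xz using nI by (simp add: weyl_uminus_mult)
  finally have s0: "(\<Sum>ij\<in>?J. zz' ij \<cdot>\<^sub>W ww h ij) = 0" by simp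
  have "zz' (?q,?q) \<cdot>\<^sub>W ww h (?q,?q) = 0"
    by (rule direct_gen[OF p h zz'Z s0 J_facts(2)[OF p]])
  then have "- x = 0" unfolding zz'_def xz using nI by (simp add: weyl_uminus_mult)
  then show "x \<in> {0}" by simp
next
  let ?p = "CHAR('a)"
  let ?q = "?p - 1"
  fix x assume "x \<in> {0 :: 'a weyl}"
  then have "x = 0" by simp
  moreover have "(0 :: 'a weyl) = wp h \<cdot>\<^sub>W 0 \<cdot>\<^sub>W Xp ?q \<cdot>\<^sub>W wp (h ^ ?q) \<cdot>\<^sub>W Yp ?q" by simp
  ultimately show "x \<in> Cset h \<inter> {wp h \<cdot>\<^sub>W z \<cdot>\<^sub>W Xp ?q \<cdot>\<^sub>W wp (h ^ ?q) \<cdot>\<^sub>W Yp ?q | z. z \<in> weyl_center (A_h h)}"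
    using C_zero Z_zero by blast
qed



theorem lemma2p3:
  fixes h :: "'a::field poly" and p :: nat
  defines "A \<equiv> A_h h"
  defines "Z \<equiv> weyl_center (A_h h)"
  defines "H \<equiv> weyl_of_poly h"
  defines "C \<equiv> {u + v | u v. u \<in> comm_set weyl_x (A_h h) \<and> v \<in> comm_set (yhat h) (A_h h)}"
  defines "I \<equiv> ({0..p-1} \<times> {0..p-1}) - {(p-1, p-1)}"
  defines "w \<equiv> (\<lambda>(i,j). H \<cdot>\<^sub>W weyl_pow weyl_x i \<cdot>\<^sub>W weyl_of_poly (h ^ j) \<cdot>\<^sub>W weyl_pow weyl_y j)"
  assumes "CHAR('a) = p" and "p > 0" and "h \<noteq> 0"
  shows
   "(\<forall>z\<in>Z. \<forall>f::'a poly. \<forall>j. j \<le> p - 2 \<longrightarrow>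
        weyl_comm (yhat h) (z \<cdot>\<^sub>W weyl_of_poly f \<cdot>\<^sub>W weyl_of_poly (h ^ j) \<cdot>\<^sub>W weyl_pow weyl_y j)
          \<in> comm_set weyl_x A)
    \<and> (\<forall>z\<in>Z. \<forall>f::'a poly.
        weyl_comm (yhat h) (z \<cdot>\<^sub>W weyl_of_poly f \<cdot>\<^sub>W weyl_of_poly (h ^ (p - 1)) \<cdot>\<^sub>W weyl_pow weyl_y (p - 1))
          = z \<cdot>\<^sub>W H \<cdot>\<^sub>W weyl_of_poly (pderiv f) \<cdot>\<^sub>W weyl_of_poly (h ^ (p - 1)) \<cdot>\<^sub>W weyl_pow weyl_y (p - 1))
    \<and> C = {\<Sum>ij\<in>I. zz ij \<cdot>\<^sub>W w ij | zz. \<forall>ij\<in>I. zz ij \<in> Z}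
    \<and> (\<forall>zz. (\<forall>ij\<in>I. zz ij \<in> Z) \<longrightarrow> (\<Sum>ij\<in>I. zz ij \<cdot>\<^sub>W w ij) = 0 \<longrightarrow>
          (\<forall>ij\<in>I. zz ij \<cdot>\<^sub>W w ij = 0))
    \<and> {H \<cdot>\<^sub>W a | a. a \<in> A} =
        {u + H \<cdot>\<^sub>W z \<cdot>\<^sub>W weyl_pow weyl_x (p - 1) \<cdot>\<^sub>W weyl_of_poly (h ^ (p - 1)) \<cdot>\<^sub>W weyl_pow weyl_y (p - 1)
          | u z. u \<in> C \<and> z \<in> Z}
    \<and> C \<inter> {H \<cdot>\<^sub>W z \<cdot>\<^sub>W weyl_pow weyl_x (p - 1) \<cdot>\<^sub>W weyl_of_poly (h ^ (p - 1)) \<cdot>\<^sub>W weyl_pow weyl_y (p - 1)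
          | z. z \<in> Z} = {0}"
proof -
  have p: "CHAR('a) > 0" using \<open>CHAR('a) = p\<close> \<open>p > 0\<close> by simp
  have pc: "p = CHAR('a)" using \<open>CHAR('a) = p\<close> by simp
  have h0: "h \<noteq> 0" by fact
  have hA: "A = A_h h" "Z = weyl_center (A_h h)" "H = wp h" by (simp_all add: A_def Z_def H_def)
  have Ceq: "C = Cset h" unfolding C_def Cset_def ..
  have Ieq: "I = Iset p" unfolding I_def Iset_def ..
  have weq: "w = ww h" unfolding w_def H_def ww_def ..
  show ?thesis
    unfolding hA Ceq Ieq weq pc
    apply (intro conjI)
    subgoal using P1[OF p] by blast
    subgoal using P2[OF p] by blast
    subgoal by (rule P3[OF p])
    subgoal using P4[OF p h0] by blast
    subgoal by (rule P5[OF p])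
    subgoal by (rule P6[OF p h0])
    done
qed


end
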